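(* Let $q\geq 3$, $n\ge 2$, let $A$ be an $n\times n$ hermitian matrix over $\mathbb{F}_{q^2}$ of rank $n-1$, and let $\mathcal{L}_1\neq\mathcal{L}_2$ be two leaves of $A$. For $i=1,2$ let $N_i$ be the hermitian matrix of rank $n-1$ of which $\mathcal{L}_i^{-1}=\{X^{-1}:X\in\mathcal{L}_i\}$ is a leaf. Then there exist an invertible matrix $Q$ and column vectors $\mathbf{z}_1\neq\mathbf{z}_2$ in $\mathbb{F}_{q^2}^{n-1}$ such that $$N_i=Q\begin{bmatrix}I_{n-1}&\mathbf{z}_i\\ \mathbf{z}_i^\ast&\mathbf{z}_i^\ast\mathbf{z}_i\end{bmatrix}Q^\ast\qquad(i=1,2),$$ and consequently $\operatorname{rank}(N_1-N_2)=2$.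
   Context: $\mathbb{F}_{q^2}$ is the field with $q^2$ elements with involution $\bar x=x^q$, fixed field $\mathbb{F}_q$; $X^\ast=\bar X^\top$; hermitian means $A^\ast=A$. Leaf: if $A$ is an $n\times n$ hermitian matrix of rank $s<n$ and $\mathbf{x}$ is not in the column space of $A$, then $\{A+\lambda\mathbf{x}\mathbf{x}^\ast: 0\ne\lambda\in\mathbb{F}_q\}$ is a leaf of $A$. For a leaf $\mathcal{L}$ of a rank-$(n-1)$ matrix (whose elements are invertible), $\mathcal{L}^{-1}$ is a leaf of a unique hermitian matrix of rank $n-1$. *)

theory Defs
  imports "Jordan_Normal_Form.DL_Rank"
begin

text \<open>Setting: the field \<open>F_{q^2}\<close> is a finite field type \<open>'a\<close> with \<open>CARD('a) = q^2\<close>;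
  the involution is \<open>x \<mapsto> x^q\<close>, whose fixed field is \<open>F_q = {x. x^q = x}\<close>.\<close>

definition cnj_vec :: "nat \<Rightarrow> 'a::field vec \<Rightarrow> 'a vec" where
  "cnj_vec q v = map_vec (\<lambda>a. a ^ q) v"

definition adj :: "nat \<Rightarrow> 'a::field mat \<Rightarrow> 'a mat" where
  "adj q X = mat (dim_col X) (dim_row X) (\<lambda>(i,j). (X $$ (j,i)) ^ q)"

definition hermitian :: "nat \<Rightarrow> 'a::field mat \<Rightarrow> bool" where
  "hermitian q A \<longleftrightarrow> adj q A = A"

definition fixed_field :: "nat \<Rightarrow> 'a::field set" where
  "fixed_field q = {a. a ^ q = a}"

definition col :: "'a::field vec \<Rightarrow> 'a mat" where
  "col x = mat_of_cols (dim_vec x) [x]"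

definition rowc :: "nat \<Rightarrow> 'a::field vec \<Rightarrow> 'a mat" where
  "rowc q x = adj q (col x)"

definition is_leaf :: "nat \<Rightarrow> nat \<Rightarrow> 'a::field mat \<Rightarrow> 'a mat set \<Rightarrow> bool" where
  "is_leaf q n A L \<longleftrightarrow>
     A \<in> carrier_mat n n \<and> hermitian q A \<and> vec_space.rank n A < n \<and>
     (\<exists>x \<in> carrier_vec n. x \<notin> vec_space.col_space n A \<and>
        L = {A + c \<cdot>\<^sub>m (col x * rowc q x) | c. c \<noteq> 0 \<and> c \<in> fixed_field q})"

definition inv_set :: "nat \<Rightarrow> 'a::field mat set \<Rightarrow> 'a mat set" where
  "inv_set n L = {Y. \<exists>X \<in> L. Y \<in> carrier_mat n n \<and> X * Y = 1\<^sub>m n \<and> Y * X = 1\<^sub>m n}"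

definition block_z :: "nat \<Rightarrow> nat \<Rightarrow> 'a::field vec \<Rightarrow> 'a mat" where
  "block_z q n z = four_block_mat (1\<^sub>m (n - 1)) (col z) (rowc q z) (rowc q z * col z)"

end

theory Submission
  imports Defs
begin


lemma ofnat_mult_closed:
  fixes T :: "'a::{finite,field} set"
  assumes "0 \<in> T" "\<forall>a\<in>T. \<forall>b\<in>T. a + b \<in> T" "y \<in> T"
  shows "of_nat k * y \<in> T"
  by (induction k) (use assms in \<open>auto simp: distrib_right\<close>)

lemma of_nat_mod_CHAR': "(of_nat (k mod CHAR('a)) :: 'a::semiring_1) = of_nat k"
proof -
  have "(of_nat k :: 'a) = of_nat ((k div CHAR('a)) * CHAR('a) + k mod CHAR('a))" by simp
  also have "\<dots> = of_nat (k mod CHAR('a))" by (simp only: of_nat_add of_nat_mult of_nat_CHAR) simp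
  finally show ?thesis by simp
qed

lemma subgroup_ext:
  fixes T :: "'a::{finite,field} set" and x :: 'a
  assumes T0: "0 \<in> T" and Tadd: "\<forall>a\<in>T. \<forall>b\<in>T. a + b \<in> T" and xT: "x \<notin> T"
  defines "T' \<equiv> (\<lambda>(t,i). t + of_nat i * x) ` (T \<times> {..<CHAR('a)})"
  shows "0 \<in> T'" "\<forall>a\<in>T'. \<forall>b\<in>T'. a + b \<in> T'" "x \<in> T'" "T \<subseteq> T'"
    "card T' = CHAR('a) * card T"
proof -
  let ?p = "CHAR('a)"
  have ppos: "?p > 0" by (rule finite_imp_CHAR_pos) simp
  have pprime: "prime ?p" using ppos prime_CHAR_semidom by blast
  have p1: "?p > 1" using pprime prime_gt_1_nat by blast
  show "0 \<in> T'" unfolding T'_def using T0 ppos by (auto intro!: image_eqI[of _ _ "(0,0)"])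
  show "x \<in> T'" unfolding T'_def using T0 p1 by (auto intro!: image_eqI[of _ _ "(0,1)"])
  show "T \<subseteq> T'" unfolding T'_def using ppos by (auto intro!: image_eqI[of _ _ "(_,0)"])
  show "\<forall>a\<in>T'. \<forall>b\<in>T'. a + b \<in> T'"
  proof (intro ballI)
    fix a b assume "a \<in> T'" "b \<in> T'"
    then obtain t i s j where a: "a = t + of_nat i * x" "t \<in> T" and b: "b = s + of_nat j * x" "s \<in> T"
      unfolding T'_def by auto
    have "a + b = (t + s) + of_nat ((i + j) mod ?p) * x"
      unfolding a b of_nat_mod_CHAR' by (simp add: algebra_simps)
    moreover have "t + s \<in> T" using Tadd a b by auto
    ultimately show "a + b \<in> T'" unfolding T'_def using ppos
      by (auto intro!: image_eqI[of _ _ "(t+s, (i+j) mod ?p)"])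
  qed
  have neg: "- y \<in> T" if "y \<in> T" for y
  proof -
    have "of_nat (?p - 1) * y = of_nat ?p * y - y" using ppos by (simp add: of_nat_diff algebra_simps)
    then have "- y = of_nat (?p - 1) * y" by simp
    moreover have "of_nat (?p - 1) * y \<in> T" by (rule ofnat_mult_closed[OF T0 Tadd that])
    ultimately show ?thesis by (simp only:)
  qed
  have inj: "inj_on (\<lambda>(t,i). t + of_nat i * x) (T \<times> {..<?p})"
  proof -
    have key: "t = s \<and> i = j" if "t \<in> T" "s \<in> T" "i < ?p" "j < ?p" "i \<le> j"
        "t + of_nat i * x = s + of_nat j * x" for t s i j
    proof (cases "i = j")
      case True then show ?thesis using that by simp
    next
      case False
      define d where "d = j - i"
      have d0: "0 < d" "d < ?p" using False that unfolding d_def by auto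
      have "of_nat d * x = of_nat j * x - of_nat i * x" unfolding d_def using \<open>i \<le> j\<close>
        by (simp add: of_nat_diff left_diff_distrib)
      also have "\<dots> = t - s" using that(6) by (simp add: algebra_simps)
      also have "\<dots> = t + (- s)" by simp
      also have "\<dots> \<in> T" using Tadd that(1) neg[OF that(2)] by blast
      finally have dx: "of_nat d * x \<in> T" .
      obtain u v where uv: "d * u = ?p * v + gcd d ?p" using bezout_nat[of d ?p] d0 by auto
      have "coprime d ?p" using d0 pprime
        by (metis coprime_commute nat_dvd_not_less prime_imp_coprime_nat)
      then have "gcd d ?p = 1" by simp
      then have "(of_nat (d*u) :: 'a) = 1" using uv by (simp add: of_nat_CHAR)
      moreover have "of_nat u * (of_nat d * x) = (of_nat (d*u) :: 'a) * x" by (simp add: ac_simps)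
      ultimately have "x = of_nat u * (of_nat d * x)" by simp
      then have "x \<in> T" using ofnat_mult_closed[OF T0 Tadd dx] by metis
      then show ?thesis using xT by simp
    qed
    show ?thesis
      unfolding inj_on_def
    proof (clarify)
      fix t i s j assume "t \<in> T" "i < ?p" "s \<in> T" "j < ?p" "t + of_nat i * x = s + of_nat j * x"
      then show "t = s \<and> i = j" using key[of t s i j] key[of s t j i] by (cases "i \<le> j") auto
    qed
  qed
  show "card T' = ?p * card T" unfolding T'_def
    by (simp add: card_image[OF inj] card_cartesian_product)
qed

lemma card_field_char_power:
  "\<exists>k. card (UNIV :: 'a::{finite,field} set) = CHAR('a) ^ k"
proof -
  have main: "\<forall>T::'a set. card (UNIV - T) = N \<longrightarrow> 0 \<in> T \<longrightarrow> (\<forall>a\<in>T. \<forall>b\<in>T. a + b \<in> T) \<longrightarrow>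
     (\<exists>k. card (UNIV :: 'a set) = card T * CHAR('a) ^ k)" for N
  proof (induction N rule: less_induct)
    case (less N)
    show ?case
    proof (intro allI impI)
      fix T :: "'a set" assume N: "card (UNIV - T) = N" and T0: "0 \<in> T" and Tadd: "\<forall>a\<in>T. \<forall>b\<in>T. a + b \<in> T"
      show "\<exists>k. card (UNIV :: 'a set) = card T * CHAR('a) ^ k"
      proof (cases "T = UNIV")
        case True then show ?thesis by (intro exI[of _ 0]) simp
      next
        case False
        then obtain x where xT: "x \<notin> T" by auto
        define T' where "T' \<equiv> (\<lambda>(t,i). t + of_nat i * x) ` (T \<times> {..<CHAR('a)})"
        note e = subgroup_ext[OF T0 Tadd xT, folded T'_def]
        have "card (UNIV - T') < N" unfolding N[symmetric]
          by (rule psubset_card_mono) (use e xT in auto)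
        then obtain k where "card (UNIV :: 'a set) = card T' * CHAR('a) ^ k"
          using less e by blast
        then show ?thesis using e by (intro exI[of _ "Suc k"]) simp
      qed
    qed
  qed
  have "\<exists>k. card (UNIV :: 'a set) = card {0::'a} * CHAR('a) ^ k"
    by (rule main[of "card (UNIV - {0::'a})", rule_format, of "{0}"]) auto
  then show ?thesis by simp
qed


lemma power_card_same:
  fixes x :: "'a::{finite,field}"
  shows "x ^ card (UNIV :: 'a set) = x"
proof (cases "x = 0")
  case False
  have "x * (\<Prod>y\<in>UNIV-{0}. x * y) = x * x ^ (card (UNIV :: 'a set) - 1) * \<Prod>(UNIV-{0})"
    by (simp add: prod.distrib mult_ac)
  also have "x * x ^ (card (UNIV :: 'a set) - 1) = x ^ Suc (card (UNIV :: 'a set) - 1)"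
    by (subst power_Suc) auto
  also have "Suc (card (UNIV :: 'a set) - 1) = card (UNIV :: 'a set)"
    using finite_UNIV_card_ge_0[where ?'a = 'a] by simp
  also have "(\<Prod>y\<in>UNIV-{0}. x * y) = (\<Prod>y\<in>UNIV-{0}. y)"
    by (rule prod.reindex_bij_witness[of _ "\<lambda>y. y / x" "\<lambda>y. x * y"]) (use False in auto)
  finally show ?thesis
    by simp
qed (use finite_UNIV_card_ge_0[where ?'a = 'a] in auto)

context
  fixes q :: nat
  assumes cq: "card (UNIV :: 'a::{finite,field} set) = q ^ 2"
begin

lemma q_pos: "q > 0"
proof -
  have "card (UNIV :: 'a set) > 0" by (simp add: finite_UNIV_card_ge_0)
  then show ?thesis using cq by (cases q) auto
qed

lemma frob_add: "((x::'a) + y) ^ q = x ^ q + y ^ q"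
proof -
  have pp: "prime CHAR('a)" using prime_CHAR_semidom finite_imp_CHAR_pos[of] by (metis finite_UNIV)
  obtain k where k: "card (UNIV :: 'a set) = CHAR('a) ^ k" using card_field_char_power by blast
  have "q * q = CHAR('a) ^ k" using k cq by (simp add: power2_eq_square)
  then have "q dvd CHAR('a) ^ k" by (metis dvd_triv_left)
  then obtain i where "q = CHAR('a) ^ i" using divides_primepow_nat[OF pp] by blast
  then show ?thesis using freshmans_dream'[OF pp] by blast
qed

lemma frob_inv: "((x::'a) ^ q) ^ q = x"
  using power_card_same[of x] cq by (simp add: power_mult[symmetric] power2_eq_square)

lemma frob_zero[simp]: "(0::'a) ^ q = 0" using q_pos by simp

lemma frob_minus: "(- (x::'a)) ^ q = - (x ^ q)"
proof -
  have "x ^ q + (- x) ^ q = 0" using frob_add[of x "-x"] by simp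
  then show ?thesis by (simp add: eq_neg_iff_add_eq_0 add.commute)
qed

lemma frob_diff: "((x::'a) - y) ^ q = x ^ q - y ^ q"
  using frob_add[of x "-y"] frob_minus[of y] by simp

lemma frob_sum: "(sum (f :: _ \<Rightarrow> 'a) A) ^ q = sum (\<lambda>i. f i ^ q) A"
  by (induction A rule: infinite_finite_induct) (auto simp: frob_add)

lemma frob_inj: "((x::'a) ^ q = y ^ q) \<longleftrightarrow> x = y"
  by (metis frob_inv)

lemma frob_eq0: "((x::'a) ^ q = 0) \<longleftrightarrow> x = 0"
  using q_pos by simp

end


lemma roots_card_le:
  fixes a :: "'a::field"
  assumes "k > 0"
  shows "card {x. x ^ k = a} \<le> k" and "finite {x::'a. x ^ k = a}"
proof -
  let ?p = "monom 1 k + [:-a:]"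
  have deg: "degree ?p = k" using assms by (simp add: degree_add_eq_left degree_monom_eq)
  have nz: "?p \<noteq> 0" using deg assms by auto
  have eq: "{x. poly ?p x = 0} = {x. x ^ k = a}" by (auto simp: poly_monom add_eq_0_iff2)
  show "card {x. x ^ k = a} \<le> k" using card_poly_roots_bound[OF nz] deg eq by simp
  show "finite {x::'a. x ^ k = a}" using poly_roots_finite[OF nz] eq by simp
qed

lemma roots_card_le2:
  fixes c :: "'a::field"
  assumes "k > 1"
  shows "card {x. x ^ k + c * x = 0} \<le> k" and "finite {x. x ^ k + c * x = 0}"
proof -
  let ?p = "monom 1 k + [:0, c:]"
  have d2: "degree [:0, c:] < k" using assms by (auto simp: degree_pCons_eq_if)
  have deg: "degree ?p = k" using assms d2 by (simp add: degree_add_eq_left degree_monom_eq)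
  have nz: "?p \<noteq> 0" using deg assms by auto
  have eq: "{x. poly ?p x = 0} = {x. x ^ k + c * x = 0}" by (auto simp: poly_monom algebra_simps)
  show "card {x. x ^ k + c * x = 0} \<le> k" using card_poly_roots_bound[OF nz] deg eq by simp
  show "finite {x. x ^ k + c * x = 0}" using poly_roots_finite[OF nz] eq by simp
qed

context
  fixes q :: nat
  assumes cq: "card (UNIV :: 'a::{finite,field} set) = q ^ 2" and q2: "q \<ge> 2"
begin

definition Fqs :: "'a set" where "Fqs = {a. a ^ q = a \<and> a \<noteq> 0}"

lemma norm_in: "(x::'a) \<noteq> 0 \<Longrightarrow> x ^ q * x \<in> Fqs"
  unfolding Fqs_def using frob_inv[OF cq, of x] q2
  by (auto simp: power_mult_distrib)

lemma card_Fqs: "card Fqs \<le> q - 1"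
proof -
  have "Fqs = {x. x ^ q + (-1) * x = 0} - {0}" unfolding Fqs_def by auto
  moreover have "0 \<in> {x::'a. x ^ q + (-1) * x = 0}" using q2 by simp
  ultimately show ?thesis using roots_card_le2[of q "-1::'a"] q2
    by (simp add: card_Diff_singleton)
qed

lemma norm_image: "(\<lambda>x::'a. x ^ q * x) ` (UNIV - {0}) = Fqs"
proof -
  let ?f = "\<lambda>x::'a. x ^ q * x"
  let ?S = "UNIV - {0::'a}"
  have sub: "?f ` ?S \<subseteq> Fqs" using norm_in by auto
  have "?S = (\<Union>a\<in>?f ` ?S. {x. x ^ Suc q = a} \<inter> ?S)" by (auto simp: mult.commute)
  then have "card ?S = card (\<Union>a\<in>?f ` ?S. {x. x ^ Suc q = a} \<inter> ?S)" by (rule arg_cong)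
  also have "\<dots> \<le> (\<Sum>a\<in>?f ` ?S. card ({x. x ^ Suc q = a} \<inter> ?S))"
    by (rule card_UN_le) simp
  finally have "card ?S \<le> (\<Sum>a\<in>?f ` ?S. card ({x. x ^ Suc q = a} \<inter> ?S))" .
  also have "\<dots> \<le> (\<Sum>a\<in>?f ` ?S. Suc q)"
  proof (rule sum_mono)
    fix a show "card ({x. x ^ Suc q = a} \<inter> ?S) \<le> Suc q"
      using roots_card_le[of "Suc q" a] card_mono[of "{x. x ^ Suc q = a}" "{x. x ^ Suc q = a} \<inter> ?S"]
      by (meson Int_lower1 order_trans zero_less_Suc)
  qed
  also have "\<dots> = card (?f ` ?S) * Suc q" by simp
  finally have A: "card ?S \<le> card (?f ` ?S) * Suc q" .
  have "card ?S = q * q - 1" using cq by (simp add: card_Diff_singleton power2_eq_square)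
  also have "q * q - 1 = (q - 1) * Suc q" using q2 by (cases q) (auto simp: algebra_simps)
  finally have "(q - 1) * Suc q \<le> card (?f ` ?S) * Suc q" using A by simp
  then have "q - 1 \<le> card (?f ` ?S)" by (simp only: mult_le_cancel2)
  then have "card Fqs \<le> card (?f ` ?S)" using card_Fqs by simp
  then show ?thesis using sub by (intro card_seteq) auto
qed

lemma norm_surj: "(a::'a) ^ q = a \<Longrightarrow> a \<noteq> 0 \<Longrightarrow> \<exists>c. c \<noteq> 0 \<and> c ^ q * c = a"
  using norm_image unfolding Fqs_def by (metis (mono_tags, lifting) Diff_iff imageE insertCI mem_Collect_eq)

lemma card_Fqs_eq: "card Fqs = q - 1"
proof -
  have "q - 1 \<le> card Fqs"
  proof -
    let ?f = "\<lambda>x::'a. x ^ q * x"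
    let ?S = "UNIV - {0::'a}"
    have "card ?S \<le> card (?f ` ?S) * Suc q"
    proof -
      have "?S = (\<Union>a\<in>?f ` ?S. {x. x ^ Suc q = a} \<inter> ?S)" by (auto simp: mult.commute)
      then have "card ?S = card (\<Union>a\<in>?f ` ?S. {x. x ^ Suc q = a} \<inter> ?S)" by (rule arg_cong)
      also have "\<dots> \<le> (\<Sum>a\<in>?f ` ?S. card ({x. x ^ Suc q = a} \<inter> ?S))"
        by (rule card_UN_le) simp
      finally have "card ?S \<le> (\<Sum>a\<in>?f ` ?S. card ({x. x ^ Suc q = a} \<inter> ?S))" .
      also have "\<dots> \<le> (\<Sum>a\<in>?f ` ?S. Suc q)"
      proof (rule sum_mono)
        fix a show "card ({x. x ^ Suc q = a} \<inter> ?S) \<le> Suc q"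
          using roots_card_le[of "Suc q" a] card_mono[of "{x. x ^ Suc q = a}" "{x. x ^ Suc q = a} \<inter> ?S"]
          by (meson Int_lower1 order_trans zero_less_Suc)
      qed
      finally show ?thesis by simp
    qed
    moreover have "card ?S = q * q - 1" using cq by (simp add: card_Diff_singleton power2_eq_square)
    moreover have "q * q - 1 = (q - 1) * Suc q" using q2 by (cases q) (auto simp: algebra_simps)
    ultimately have "(q - 1) * Suc q \<le> card (?f ` ?S) * Suc q" by simp
    then have "q - 1 \<le> card (?f ` ?S)" by (simp only: mult_le_cancel2)
    then show ?thesis using norm_image by simp
  qed
  then show ?thesis using card_Fqs by simp
qed

lemma trace_nonzero: "\<exists>y::'a. y ^ q + y \<noteq> 0"
proof (rule ccontr)
  assume "\<not> ?thesis"
  then have "{x::'a. x ^ q + 1 * x = 0} = UNIV" by auto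
  then have "card (UNIV :: 'a set) \<le> q" using roots_card_le2[of q "1::'a"] q2 by simp
  moreover have "q < q ^ 2" using q2 by (simp add: power2_eq_square)
  ultimately show False using cq by simp
qed

end


lemma adj_dims[simp]: "dim_row (adj q X) = dim_col X" "dim_col (adj q X) = dim_row X"
  unfolding adj_def by auto

lemma adj_index[simp]: "i < dim_col X \<Longrightarrow> j < dim_row X \<Longrightarrow> adj q X $$ (i,j) = X $$ (j,i) ^ q"
  unfolding adj_def by auto

lemma adj_carrier[simp]: "X \<in> carrier_mat n m \<Longrightarrow> adj q X \<in> carrier_mat m n"
  unfolding carrier_mat_def by auto

context
  fixes q :: nat
  assumes cq: "card (UNIV :: 'a::{finite,field} set) = q ^ 2"
begin

lemma adj_adj[simp]: "adj q (adj q (X :: 'a mat)) = X"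
  by (rule eq_matI) (auto simp: frob_inv[OF cq])

lemma adj_mult: assumes "(A :: 'a mat) \<in> carrier_mat n k" "B \<in> carrier_mat k m"
  shows "adj q (A * B) = adj q B * adj q A"
proof (rule eq_matI)
  fix i j assume ij: "i < dim_row (adj q B * adj q A)" "j < dim_col (adj q B * adj q A)"
  then have i: "i < m" and j: "j < n" using assms by auto
  have "adj q (A * B) $$ (i,j) = (row A j \<bullet> Matrix.col B i) ^ q" using i j assms by simp
  also have "\<dots> = (\<Sum>l<k. A $$ (j,l) * B $$ (l,i)) ^ q" using i j assms
    by (simp add: scalar_prod_def lessThan_atLeast0)
  also have "\<dots> = (\<Sum>l<k. B $$ (l,i) ^ q * A $$ (j,l) ^ q)"
    by (simp add: frob_sum[OF cq] power_mult_distrib mult.commute)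
  also have "\<dots> = (adj q B * adj q A) $$ (i,j)" using i j assms
    by (simp add: scalar_prod_def lessThan_atLeast0)
  finally show "adj q (A * B) $$ (i,j) = (adj q B * adj q A) $$ (i,j)" .
qed (use assms in auto)

lemma adj_add: assumes "(A :: 'a mat) \<in> carrier_mat n m" "B \<in> carrier_mat n m"
  shows "adj q (A + B) = adj q A + adj q B"
  by (rule eq_matI) (use assms in \<open>auto simp: frob_add[OF cq]\<close>)

lemma adj_minus: assumes "(A :: 'a mat) \<in> carrier_mat n m" "B \<in> carrier_mat n m"
  shows "adj q (A - B) = adj q A - adj q B"
  by (rule eq_matI) (use assms in \<open>auto simp: frob_diff[OF cq]\<close>)

lemma adj_uminus: "adj q (- (A :: 'a mat)) = - adj q A"
  by (rule eq_matI) (auto simp: frob_minus[OF cq])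

lemma adj_smult: "adj q (c \<cdot>\<^sub>m (A :: 'a mat)) = (c ^ q) \<cdot>\<^sub>m adj q A"
  by (rule eq_matI) (auto simp: power_mult_distrib)

lemma adj_one[simp]: "adj q (1\<^sub>m n :: 'a mat) = 1\<^sub>m n"
  by (rule eq_matI) (auto simp: q_pos[OF cq])

lemma adj_zero[simp]: "adj q (0\<^sub>m n m :: 'a mat) = 0\<^sub>m m n"
  by (rule eq_matI) (auto simp: q_pos[OF cq])

lemma adj_four_block: assumes "(A :: 'a mat) \<in> carrier_mat n1 m1" "B \<in> carrier_mat n1 m2"
  "C \<in> carrier_mat n2 m1" "D \<in> carrier_mat n2 m2"
  shows "adj q (four_block_mat A B C D) = four_block_mat (adj q A) (adj q C) (adj q B) (adj q D)"
  by (rule eq_matI) (use assms in auto)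

lemma hermitian_congr: assumes "(A :: 'a mat) \<in> carrier_mat n n" "P \<in> carrier_mat m n" "hermitian q A"
  shows "hermitian q (P * A * adj q P)"
proof -
  have "adj q (P * A * adj q P) = adj q (adj q P) * adj q (P * A)"
    using assms by (intro adj_mult) auto
  also have "\<dots> = P * (adj q A * adj q P)" using assms by (simp add: adj_mult)
  also have "\<dots> = P * (A * adj q P)" using assms unfolding hermitian_def by simp
  also have "\<dots> = P * A * adj q P" using assms by (intro assoc_mult_mat[symmetric]) auto
  finally show ?thesis unfolding hermitian_def .
qed

lemma hermitian_entry: "hermitian q (A :: 'a mat) \<Longrightarrow> A \<in> carrier_mat n n \<Longrightarrow> i < n \<Longrightarrow> j < n \<Longrightarrow>
  A $$ (j,i) = A $$ (i,j) ^ q"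
  unfolding hermitian_def by (metis adj_index carrier_matD)

lemma triple_entry: assumes "(P :: 'a mat) \<in> carrier_mat nr n" "A \<in> carrier_mat n n" "R \<in> carrier_mat nc n"
  "i < nr" "j < nc"
  shows "(P * A * adj q R) $$ (i,j) = (\<Sum>k<n. \<Sum>l<n. P $$ (i,k) * A $$ (k,l) * R $$ (j,l) ^ q)"
proof -
  have "(P * A * adj q R) $$ (i,j) = (\<Sum>l<n. (P * A) $$ (i,l) * R $$ (j,l) ^ q)"
    using assms by (simp add: scalar_prod_def lessThan_atLeast0)
  also have "\<dots> = (\<Sum>l<n. (\<Sum>k<n. P $$ (i,k) * A $$ (k,l)) * R $$ (j,l) ^ q)"
    using assms by (simp add: scalar_prod_def lessThan_atLeast0)
  also have "\<dots> = (\<Sum>k<n. \<Sum>l<n. P $$ (i,k) * A $$ (k,l) * R $$ (j,l) ^ q)"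
    by (simp add: sum_distrib_right) (rule sum.swap)
  finally show ?thesis .
qed

end

lemma rank_sum_prod:
  fixes A :: "'a::field mat"
  assumes "finite K" "A \<in> carrier_mat n nc"
    "\<And>i j. i < n \<Longrightarrow> j < nc \<Longrightarrow> A $$ (i,j) = (\<Sum>a\<in>K. f a i * g a j)"
  shows "vec_space.rank n A \<le> card K"
  using assms
proof (induction K arbitrary: A rule: finite_induct)
  case empty
  then have "A = 0\<^sub>m n nc" by (intro eq_matI) auto
  then show ?case using vec_space.rank_0I by simp
next
  case (insert a K)
  define A1 where "A1 = mat n nc (\<lambda>(i,j). f a i * g a j)"
  define A2 where "A2 = mat n nc (\<lambda>(i,j). \<Sum>b\<in>K. f b i * g b j)"
  have "A = A1 + A2" using insert unfolding A1_def A2_def by (intro eq_matI) auto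
  moreover have "vec_space.rank n A1 \<le> 1"
    by (rule vec_space.rank_le_1_product_entries[of A1 n nc "f a" "g a"]) (auto simp: A1_def)
  moreover have "vec_space.rank n A2 \<le> card K"
    by (rule insert.IH) (auto simp: A2_def)
  moreover have "vec_space.rank n (A1 + A2) \<le> vec_space.rank n A1 + vec_space.rank n A2"
    by (rule vec_space.rank_subadditive) (auto simp: A1_def A2_def)
  ultimately show ?case using insert by simp
qed


definition Dk :: "nat \<Rightarrow> nat \<Rightarrow> 'b::zero_neq_one mat" where
  "Dk n k = mat n n (\<lambda>(i,j). if i = j \<and> i < k then 1 else 0)"

lemma Dk_dims[simp]: "dim_row (Dk n k) = n" "dim_col (Dk n k) = n" "Dk n k \<in> carrier_mat n n"
  unfolding Dk_def by auto


context
  fixes q :: nat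
  assumes cq: "card (UNIV :: 'a::{finite,field} set) = q ^ 2" and q2: "q \<ge> 2"
begin

lemma congr_comp: assumes "(P1 :: 'a mat) \<in> carrier_mat n n" "P2 \<in> carrier_mat n n" "A \<in> carrier_mat n n"
  shows "(P2 * P1) * A * adj q (P2 * P1) = P2 * (P1 * A * adj q P1) * adj q P2"
proof -
  have "adj q (P2 * P1) = adj q P1 * adj q P2" using assms by (intro adj_mult[OF cq]) auto
  then show ?thesis using assms
    by (simp add: assoc_mult_mat[of _ n n _ n _ n] mult_carrier_mat[of _ n n _ n])
qed

lemma row_quad: assumes "(P :: 'a mat) \<in> carrier_mat n n" "A \<in> carrier_mat n n" "i < n"
  "\<And>k. k < n \<Longrightarrow> P $$ (i,k) = r k"
  shows "(P * A * adj q P) $$ (i,i) = (\<Sum>k<n. \<Sum>l<n. r k * A $$ (k,l) * r l ^ q)"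
  using triple_entry[OF cq assms(1,2,1,3,3)] assms(4) by simp

lemma piv_diag: assumes "(A :: 'a mat) \<in> carrier_mat n n" "i < n"
  shows "\<exists>P. P \<in> carrier_mat n n \<and> det P \<noteq> 0 \<and> (P * A * adj q P) $$ (0,0) = A $$ (i,i)"
proof (cases "i = 0")
  case True
  then show ?thesis using assms by (intro exI[of _ "1\<^sub>m n"]) (simp add: adj_one[OF cq])
next
  case False
  let ?P = "swaprows_mat n 0 i :: 'a mat"
  have "det ?P = -1" using det_swaprows_mat[of 0 n i] False assms by simp
  then have d: "det ?P \<noteq> 0" by simp
  have "(?P * A * adj q ?P) $$ (0,0) = (\<Sum>k<n. \<Sum>l<n. (if k = i then 1 else 0) * A $$ (k,l) * (if l = i then 1 else 0) ^ q)"
    by (rule row_quad) (use assms False in auto)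
  also have "\<dots> = A $$ (i,i)" using assms q_pos[OF cq]
    by (simp add: frob_zero[OF cq] if_distrib[of "\<lambda>x. x ^ q"] if_distrib[of "\<lambda>x. x * _"] if_distrib[of "\<lambda>x. _ * x"] cong: if_cong)
  finally show ?thesis using d by (intro exI[of _ ?P]) auto
qed

lemma piv_off: assumes "(A :: 'a mat) \<in> carrier_mat n n" "hermitian q A" "i < n" "j < n"
  "A $$ (i,i) = 0" "A $$ (j,j) = 0" "A $$ (i,j) \<noteq> 0"
  shows "\<exists>P. P \<in> carrier_mat n n \<and> det P \<noteq> 0 \<and> (P * A * adj q P) $$ (i,i) \<noteq> 0"
proof -
  have ij: "i \<noteq> j" using assms by auto
  obtain y :: 'a where y: "y ^ q + y \<noteq> 0" using trace_nonzero[OF cq q2] by blast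
  define a where "a = A $$ (i,j)"
  define d where "d = (y / a) ^ q"
  have dq: "d ^ q = y / a" unfolding d_def by (rule frob_inv[OF cq])
  have Aji: "A $$ (j,i) = a ^ q" unfolding a_def by (rule hermitian_entry[OF cq assms(2,1,3,4)])
  let ?P = "addrow_mat n d i j :: 'a mat"
  have "det ?P = 1" by (rule det_addrow_mat[OF ij])
  then have det: "det ?P \<noteq> 0" by simp
  let ?r = "\<lambda>k. (if k = i then 1 else 0) + (if k = j then d else (0::'a))"
  have "(?P * A * adj q ?P) $$ (i,i) = (\<Sum>k<n. \<Sum>l<n. ?r k * A $$ (k,l) * ?r l ^ q)"
    by (rule row_quad) (use assms ij in auto)
  also have "\<dots> = (\<Sum>k<n. \<Sum>l<n. ((if k = i then 1 else 0) + (if k = j then d else 0)) * A $$ (k,l) *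
        ((if l = i then 1 else 0) + (if l = j then d ^ q else 0)))"
    using q_pos[OF cq] by (intro sum.cong refl) (auto simp: frob_add[OF cq])
  also have "\<dots> = A $$ (i,i) + A $$ (i,j) * d ^ q + d * A $$ (j,i) + d * A $$ (j,j) * d ^ q"
    using assms ij by (simp add: ring_distribs sum.distrib if_distrib[of "\<lambda>x. x * _"] if_distrib[of "\<lambda>x. _ * x"] cong: if_cong)
  also have "\<dots> = y + y ^ q"
    using assms(5,6,7) unfolding Aji dq a_def[symmetric] d_def by (simp add: power_divide power_mult_distrib frob_inv[OF cq] frob_eq0[OF cq])
  finally show ?thesis using det y by (intro exI[of _ ?P]) (auto simp: add.commute)
qed


lemma piv_norm: assumes "(A :: 'a mat) \<in> carrier_mat n n" "hermitian q A" "0 < n" "A $$ (0,0) \<noteq> 0"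
  shows "\<exists>P. P \<in> carrier_mat n n \<and> det P \<noteq> 0 \<and> (P * A * adj q P) $$ (0,0) = 1"
proof -
  define b where "b = A $$ (0,0)"
  have bq: "b ^ q = b" unfolding b_def using hermitian_entry[OF cq assms(2,1,3,3)] by (rule sym)
  have b0: "b \<noteq> 0" using assms(4) unfolding b_def .
  obtain c where c: "c \<noteq> 0" "c ^ q * c = b" using norm_surj[OF cq q2 bq b0] by blast
  define e where "e = 1 / c"
  let ?P = "multrow_mat n 0 e :: 'a mat"
  have "det ?P = e" by (rule det_multrow_mat[OF assms(3)])
  then have det: "det ?P \<noteq> 0" using c unfolding e_def by simp
  have "(?P * A * adj q ?P) $$ (0,0) = (\<Sum>k<n. \<Sum>l<n. (if k = 0 then e else 0) * A $$ (k,l) * (if l = 0 then e else 0) ^ q)"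
    by (rule row_quad) (use assms in auto)
  also have "\<dots> = e * b * e ^ q" using assms unfolding b_def
    by (simp add: frob_zero[OF cq] if_distrib[of "\<lambda>x. x ^ q"] if_distrib[of "\<lambda>x. x * _"] if_distrib[of "\<lambda>x. _ * x"] cong: if_cong)
  also have "\<dots> = 1" unfolding e_def c(2)[symmetric] using c(1) frob_eq0[OF cq, of c]
    by (simp add: power_divide frob_zero[OF cq] q_pos[OF cq])
  finally show ?thesis using det by (intro exI[of _ ?P]) auto
qed

lemma pivot_diag: assumes "(A :: 'a mat) \<in> carrier_mat n n" "hermitian q A" "i < n" "A $$ (i,i) \<noteq> 0"
  shows "\<exists>P. P \<in> carrier_mat n n \<and> det P \<noteq> 0 \<and> (P * A * adj q P) $$ (0,0) = 1"
proof -
  obtain P1 where P1: "P1 \<in> carrier_mat n n" "det P1 \<noteq> 0" "(P1 * A * adj q P1) $$ (0,0) = A $$ (i,i)"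
    using piv_diag[OF assms(1,3)] by blast
  let ?B = "P1 * A * adj q P1"
  have B: "?B \<in> carrier_mat n n" "hermitian q ?B" using P1 assms hermitian_congr[OF cq assms(1) P1(1) assms(2)] by auto
  obtain P2 where P2: "P2 \<in> carrier_mat n n" "det P2 \<noteq> 0" "(P2 * ?B * adj q P2) $$ (0,0) = 1"
    using piv_norm[OF B] assms P1 by auto
  show ?thesis using P1 P2 congr_comp[OF P1(1) P2(1) assms(1)] det_mult[OF P2(1) P1(1)]
    by (intro exI[of _ "P2 * P1"]) auto
qed

lemma pivot: assumes "(A :: 'a mat) \<in> carrier_mat n n" "hermitian q A" "A \<noteq> 0\<^sub>m n n"
  shows "\<exists>P. P \<in> carrier_mat n n \<and> det P \<noteq> 0 \<and> (P * A * adj q P) $$ (0,0) = 1"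
proof (cases "\<exists>i<n. A $$ (i,i) \<noteq> 0")
  case True
  then show ?thesis using pivot_diag[OF assms(1,2)] by blast
next
  case False
  have "\<exists>i<n. \<exists>j<n. A $$ (i,j) \<noteq> 0"
  proof (rule ccontr)
    assume "\<not> (\<exists>i<n. \<exists>j<n. A $$ (i,j) \<noteq> 0)"
    then have "A = 0\<^sub>m n n" using assms(1) by (intro eq_matI) auto
    with assms(3) show False by simp
  qed
  then obtain i j where ij: "i < n" "j < n" "A $$ (i,j) \<noteq> 0" by blast
  obtain P1 where P1: "P1 \<in> carrier_mat n n" "det P1 \<noteq> 0" "(P1 * A * adj q P1) $$ (i,i) \<noteq> 0"
    using piv_off[OF assms(1,2) ij(1,2) _ _ ij(3)] False ij by blast
  let ?B = "P1 * A * adj q P1"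
  have B: "?B \<in> carrier_mat n n" "hermitian q ?B" using P1 assms hermitian_congr[OF cq assms(1) P1(1) assms(2)] by auto
  obtain P2 where P2: "P2 \<in> carrier_mat n n" "det P2 \<noteq> 0" "(P2 * ?B * adj q P2) $$ (0,0) = 1"
    using pivot_diag[OF B ij(1) P1(3)] by blast
  show ?thesis using P1 P2 congr_comp[OF P1(1) P2(1) assms(1)] det_mult[OF P2(1) P1(1)]
    by (intro exI[of _ "P2 * P1"]) auto
qed


lemma elim: assumes B: "(B :: 'a mat) \<in> carrier_mat (Suc m) (Suc m)" and hB: "hermitian q B" and B00: "B $$ (0,0) = 1"
  shows "\<exists>E C. E \<in> carrier_mat (Suc m) (Suc m) \<and> det E \<noteq> 0 \<and> C \<in> carrier_mat m m \<and> hermitian q C \<and>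
     E * B * adj q E = four_block_mat (1\<^sub>m 1) (0\<^sub>m 1 m) (0\<^sub>m m 1) C"
proof -
  define B2 where "B2 = mat 1 m (\<lambda>(i,j). B $$ (0, j+1))"
  define B3 where "B3 = adj q B2"
  define B4 where "B4 = mat m m (\<lambda>(i,j). B $$ (i+1, j+1))"
  have c2: "B2 \<in> carrier_mat 1 m" and c3: "B3 \<in> carrier_mat m 1" and c4: "B4 \<in> carrier_mat m m"
    unfolding B2_def B3_def B4_def by auto
  have Bs: "B = four_block_mat (1\<^sub>m 1) B2 B3 B4"
  proof (rule eq_matI)
    fix i j assume ij: "i < dim_row (four_block_mat (1\<^sub>m 1) B2 B3 B4)" "j < dim_col (four_block_mat (1\<^sub>m 1) B2 B3 B4)"
    then have i: "i < Suc m" and j: "j < Suc m" using c2 c3 c4 by auto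
    show "B $$ (i,j) = four_block_mat (1\<^sub>m 1) B2 B3 B4 $$ (i,j)"
    proof (cases "i = 0")
      case True then show ?thesis using j c2 c3 c4 B00 unfolding B2_def by (cases "j = 0") auto
    next
      case False
      then show ?thesis using i j c2 c3 c4 hermitian_entry[OF cq hB B, of 0 i] unfolding B2_def B3_def B4_def
        by (cases "j = 0") auto
    qed
  qed (use B c2 c3 c4 in auto)
  have hB4: "adj q B4 = B4"
  proof (rule eq_matI)
    fix i j assume "i < dim_row B4" "j < dim_col B4"
    then have ij: "i < m" "j < m" using c4 by auto
    show "adj q B4 $$ (i,j) = B4 $$ (i,j)" using ij hermitian_entry[OF cq hB B, of "j+1" "i+1"]
      unfolding B4_def by simp
  qed (use c4 in auto)
  define C where "C = B4 - B3 * B2"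
  have cC: "C \<in> carrier_mat m m" unfolding C_def using c2 c3 c4 by auto
  have hC: "hermitian q C"
  proof -
    have "adj q C = adj q B4 - adj q (B3 * B2)" unfolding C_def using c2 c3 c4
      by (intro adj_minus[OF cq]) auto
    also have "\<dots> = B4 - B3 * B2" using adj_mult[OF cq c3 c2] hB4 unfolding B3_def by (simp add: adj_adj[OF cq])
    finally show ?thesis unfolding hermitian_def C_def .
  qed
  define E where "E = four_block_mat (1\<^sub>m 1) (0\<^sub>m 1 m) (- B3) (1\<^sub>m m)"
  have cE: "E \<in> carrier_mat (Suc m) (Suc m)" unfolding E_def using c3 by auto
  have dE: "det E = 1" unfolding E_def
    by (subst det_four_block_mat_upper_right_zero[of _ 1 _ m]) (use c3 in auto)
  have EB: "E * B = four_block_mat (1\<^sub>m 1) B2 (0\<^sub>m m 1) C"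
  proof -
    have "E * B = four_block_mat (1\<^sub>m 1 * 1\<^sub>m 1 + 0\<^sub>m 1 m * B3) (1\<^sub>m 1 * B2 + 0\<^sub>m 1 m * B4)
          (- B3 * 1\<^sub>m 1 + 1\<^sub>m m * B3) (- B3 * B2 + 1\<^sub>m m * B4)"
      unfolding E_def Bs by (rule mult_four_block_mat) (use c2 c3 c4 in auto)
    also have "\<dots> = four_block_mat (1\<^sub>m 1) B2 (0\<^sub>m m 1) C"
    proof (rule cong_four_block_mat)
      show "1\<^sub>m 1 * 1\<^sub>m 1 + 0\<^sub>m 1 m * B3 = (1\<^sub>m 1 :: 'a mat)" using c3 by simp
      show "1\<^sub>m 1 * B2 + 0\<^sub>m 1 m * B4 = B2" using c2 c4 by simp
      show "- B3 * 1\<^sub>m 1 + 1\<^sub>m m * B3 = 0\<^sub>m m 1" using c3 by (intro eq_matI) auto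
      show "- B3 * B2 + 1\<^sub>m m * B4 = C" unfolding C_def using c2 c3 c4
        by (intro eq_matI) auto
    qed
    finally show ?thesis .
  qed
  have aE: "adj q E = four_block_mat (1\<^sub>m 1) (- B2) (0\<^sub>m m 1) (1\<^sub>m m)"
    unfolding E_def using c3 by (subst adj_four_block[OF cq]) (auto simp: adj_uminus[OF cq] B3_def adj_adj[OF cq] adj_one[OF cq] adj_zero[OF cq])
  have "E * B * adj q E = four_block_mat (1\<^sub>m 1 * 1\<^sub>m 1 + B2 * 0\<^sub>m m 1) (1\<^sub>m 1 * - B2 + B2 * 1\<^sub>m m)
          (0\<^sub>m m 1 * 1\<^sub>m 1 + C * 0\<^sub>m m 1) (0\<^sub>m m 1 * - B2 + C * 1\<^sub>m m)"
    unfolding EB aE by (rule mult_four_block_mat) (use c2 cC in auto)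
  also have "\<dots> = four_block_mat (1\<^sub>m 1) (0\<^sub>m 1 m) (0\<^sub>m m 1) C"
  proof (rule cong_four_block_mat)
    show "1\<^sub>m 1 * 1\<^sub>m 1 + B2 * 0\<^sub>m m 1 = (1\<^sub>m 1 :: 'a mat)" using c2 by simp
    show "1\<^sub>m 1 * - B2 + B2 * 1\<^sub>m m = 0\<^sub>m 1 m" using c2 by (intro eq_matI) auto
    show "0\<^sub>m m 1 * 1\<^sub>m 1 + C * 0\<^sub>m m 1 = 0\<^sub>m m 1" using cC by simp
    show "0\<^sub>m m 1 * - B2 + C * 1\<^sub>m m = C" using c2 cC by (intro eq_matI) auto
  qed
  finally show ?thesis using cE dE cC hC by (intro exI[of _ E] exI[of _ C]) auto
qed



lemma classify: assumes "(A :: 'a mat) \<in> carrier_mat n n" "hermitian q A"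
  shows "\<exists>P k. P \<in> carrier_mat n n \<and> det P \<noteq> 0 \<and> k \<le> n \<and> P * A * adj q P = Dk n k"
  using assms
proof (induction n arbitrary: A)
  case 0
  have "1\<^sub>m 0 * A * adj q (1\<^sub>m 0) = Dk 0 0" by (rule eq_matI) (use 0 in \<open>auto simp: Dk_def\<close>)
  then show ?case by (intro exI[of _ "1\<^sub>m 0"] exI[of _ 0]) auto
next
  case (Suc m)
  show ?case
  proof (cases "A = 0\<^sub>m (Suc m) (Suc m)")
    case True
    have "1\<^sub>m (Suc m) * A * adj q (1\<^sub>m (Suc m)) = Dk (Suc m) 0"
      unfolding True adj_one[OF cq] by (rule eq_matI) (auto simp: Dk_def)
    then show ?thesis by (intro exI[of _ "1\<^sub>m (Suc m)"] exI[of _ 0]) auto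
  next
    case False
    obtain P1 where P1: "P1 \<in> carrier_mat (Suc m) (Suc m)" "det P1 \<noteq> 0" "(P1 * A * adj q P1) $$ (0,0) = 1"
      using pivot[OF Suc.prems False] by blast
    define B where "B = P1 * A * adj q P1"
    have cB: "B \<in> carrier_mat (Suc m) (Suc m)" and hB: "hermitian q B"
      unfolding B_def using P1 Suc.prems hermitian_congr[OF cq Suc.prems(1) P1(1) Suc.prems(2)] by auto
    obtain E C where EC: "E \<in> carrier_mat (Suc m) (Suc m)" "det E \<noteq> 0" "C \<in> carrier_mat m m" "hermitian q C"
      "E * B * adj q E = four_block_mat (1\<^sub>m 1) (0\<^sub>m 1 m) (0\<^sub>m m 1) C"
      using elim[OF cB hB] P1(3) unfolding B_def by blast
    obtain P' k' where P': "P' \<in> carrier_mat m m" "det P' \<noteq> 0" "k' \<le> m" "P' * C * adj q P' = Dk m k'"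
      using Suc.IH[OF EC(3,4)] by blast
    define F where "F = four_block_mat (1\<^sub>m 1) (0\<^sub>m 1 m) (0\<^sub>m m 1) P'"
    have cF: "F \<in> carrier_mat (Suc m) (Suc m)" unfolding F_def using P' by auto
    have dF: "det F = det P'" unfolding F_def
      by (subst det_four_block_mat_upper_right_zero[of _ 1 _ m]) (use P' in auto)
    have aF: "adj q F = four_block_mat (1\<^sub>m 1) (0\<^sub>m 1 m) (0\<^sub>m m 1) (adj q P')"
      unfolding F_def using P' by (subst adj_four_block[OF cq]) (auto simp: adj_one[OF cq] adj_zero[OF cq])
    have "F * four_block_mat (1\<^sub>m 1) (0\<^sub>m 1 m) (0\<^sub>m m 1) C = four_block_mat (1\<^sub>m 1) (0\<^sub>m 1 m) (0\<^sub>m m 1) (P' * C)"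
    proof -
      have "F * four_block_mat (1\<^sub>m 1) (0\<^sub>m 1 m) (0\<^sub>m m 1) C = four_block_mat (1\<^sub>m 1 * 1\<^sub>m 1 + 0\<^sub>m 1 m * 0\<^sub>m m 1)
        (1\<^sub>m 1 * 0\<^sub>m 1 m + 0\<^sub>m 1 m * C) (0\<^sub>m m 1 * 1\<^sub>m 1 + P' * 0\<^sub>m m 1) (0\<^sub>m m 1 * 0\<^sub>m 1 m + P' * C)"
        unfolding F_def by (rule mult_four_block_mat) (use P' EC in auto)
      also have "\<dots> = four_block_mat (1\<^sub>m 1) (0\<^sub>m 1 m) (0\<^sub>m m 1) (P' * C)"
        using P' EC by (intro cong_four_block_mat) (auto intro!: eq_matI)
      finally show ?thesis .
    qed
    also have "\<dots> * adj q F = four_block_mat (1\<^sub>m 1) (0\<^sub>m 1 m) (0\<^sub>m m 1) (P' * C * adj q P')"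
    proof -
      have "four_block_mat (1\<^sub>m 1) (0\<^sub>m 1 m) (0\<^sub>m m 1) (P' * C) * adj q F = four_block_mat (1\<^sub>m 1 * 1\<^sub>m 1 + 0\<^sub>m 1 m * 0\<^sub>m m 1)
        (1\<^sub>m 1 * 0\<^sub>m 1 m + 0\<^sub>m 1 m * adj q P') (0\<^sub>m m 1 * 1\<^sub>m 1 + (P' * C) * 0\<^sub>m m 1) (0\<^sub>m m 1 * 0\<^sub>m 1 m + (P' * C) * adj q P')"
        unfolding aF by (rule mult_four_block_mat) (use P' EC in auto)
      also have "\<dots> = four_block_mat (1\<^sub>m 1) (0\<^sub>m 1 m) (0\<^sub>m m 1) (P' * C * adj q P')"
        using P' EC by (intro cong_four_block_mat) (auto intro!: eq_matI)
      finally show ?thesis .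
    qed
    also have "\<dots> = Dk (Suc m) (Suc k')" unfolding P'(4)
      by (rule eq_matI) (auto simp: Dk_def)
    finally have FD: "F * four_block_mat (1\<^sub>m 1) (0\<^sub>m 1 m) (0\<^sub>m m 1) C * adj q F = Dk (Suc m) (Suc k')" .
    define P where "P = F * (E * P1)"
    have cP: "P \<in> carrier_mat (Suc m) (Suc m)" unfolding P_def using cF EC P1 by auto
    have dP: "det P \<noteq> 0" unfolding P_def using det_mult[OF cF, of "E * P1"] det_mult[OF EC(1) P1(1)] EC P1 dF P'
      by auto
    have "P * A * adj q P = F * ((E * P1) * A * adj q (E * P1)) * adj q F"
      unfolding P_def by (rule congr_comp) (use cF EC P1 Suc.prems in auto)
    also have "(E * P1) * A * adj q (E * P1) = E * B * adj q E"
      unfolding B_def by (rule congr_comp) (use EC P1 Suc.prems in auto)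
    finally have "P * A * adj q P = Dk (Suc m) (Suc k')" using FD EC(5) by simp
    then show ?thesis using cP dP P' by (intro exI[of _ P] exI[of _ "Suc k'"]) auto
  qed
qed

end


lemma col_dims[simp]: "dim_row (col v) = dim_vec v" "dim_col (col v) = 1" "col v \<in> carrier_mat (dim_vec v) 1"
  unfolding col_def by auto

lemma col_index[simp]: "i < dim_vec v \<Longrightarrow> col v $$ (i,0) = v $ i"
  unfolding col_def mat_of_cols_def by auto

lemma col_carrier: "v \<in> carrier_vec n \<Longrightarrow> col v \<in> carrier_mat n 1" by auto

lemma rowc_dims[simp]: "dim_row (rowc q v) = 1" "dim_col (rowc q v) = dim_vec v"
  unfolding rowc_def by auto

lemma rowc_index[simp]: "j < dim_vec v \<Longrightarrow> rowc q v $$ (0,j) = (v $ j) ^ q"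
  unfolding rowc_def by simp

lemma rowc_carrier: "v \<in> carrier_vec n \<Longrightarrow> rowc q v \<in> carrier_mat 1 n" unfolding carrier_mat_def by auto

lemma outer_index: "i < dim_vec v \<Longrightarrow> j < dim_vec w \<Longrightarrow> (col v * rowc q w) $$ (i,j) = v $ i * (w $ j) ^ q"
  by (simp add: scalar_prod_def)

lemma col_mult: assumes "M \<in> carrier_mat n k" "v \<in> carrier_vec k"
  shows "col (M *\<^sub>v v) = M * col v"
  by (rule eq_matI) (use assms in \<open>auto simp: scalar_prod_def\<close>)

lemma Dk_index: "i < n \<Longrightarrow> j < n \<Longrightarrow> Dk n k $$ (i,j) = (if i = j \<and> i < k then 1 else 0)"
  unfolding Dk_def by simp

definition Em :: "nat \<Rightarrow> 'b::zero_neq_one mat" where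
  "Em n = mat n n (\<lambda>(i,j). if i = n - 1 \<and> j = n - 1 then 1 else 0)"

lemma Em_dims[simp]: "dim_row (Em n) = n" "dim_col (Em n) = n" "Em n \<in> carrier_mat n n"
  unfolding Em_def by auto

lemma Em_index: "i < n \<Longrightarrow> j < n \<Longrightarrow> Em n $$ (i,j) = (if i = n - 1 \<and> j = n - 1 then 1 else 0)"
  unfolding Em_def by auto

lemma block_z_carrier: "z \<in> carrier_vec m \<Longrightarrow> block_z q (Suc m) z \<in> carrier_mat (Suc m) (Suc m)"
proof -
  assume z: "z \<in> carrier_vec m"
  have "four_block_mat (1\<^sub>m m) (col z) (rowc q z) (rowc q z * col z) \<in> carrier_mat (m + 1) (m + 1)"
    by (rule four_block_carrier_mat) (use z in auto)
  then show ?thesis unfolding block_z_def by simp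
qed

lemma block_z_index: assumes "(z :: 'a::field vec) \<in> carrier_vec m" "i < Suc m" "j < Suc m"
  shows "block_z q (Suc m) z $$ (i,j) = (if i < m then (if j < m then (if i = j then 1 else 0) else z $ i)
     else (if j < m then (z $ j) ^ q else (\<Sum>k<m. (z $ k) ^ q * z $ k)))"
proof -
  have d: "dim_vec z = m" using assms by auto
  have "block_z q (Suc m) z $$ (i,j) = four_block_mat (1\<^sub>m m) (col z) (rowc q z) (rowc q z * col z) $$ (i,j)"
    unfolding block_z_def by simp
  also have "\<dots> = (if i < m then (if j < m then (if i = j then 1 else 0) else z $ i)
     else (if j < m then (z $ j) ^ q else (\<Sum>k<m. (z $ k) ^ q * z $ k)))"
    using assms d by (auto simp: scalar_prod_def lessThan_atLeast0)
  finally show ?thesis .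
qed


context
  fixes q :: nat
  assumes cq: "card (UNIV :: 'a::{finite,field} set) = q ^ 2"
begin

lemma core: assumes x: "(x :: 'a vec) \<in> carrier_vec (Suc m)" and t: "x $ m \<noteq> 0" and l: "l \<noteq> 0"
  defines "t \<equiv> x $ m"
  defines "z \<equiv> vec m (\<lambda>i. - x $ i / t)"
  defines "\<mu> \<equiv> 1 / (l * t ^ q * t)"
  shows "(Dk (Suc m) m + l \<cdot>\<^sub>m (col x * rowc q x)) * (block_z q (Suc m) z + \<mu> \<cdot>\<^sub>m Em (Suc m)) = 1\<^sub>m (Suc m)"
proof -
  let ?n = "Suc m"
  have t0: "t \<noteq> 0" using t unfolding t_def .
  have tq: "t ^ q \<noteq> 0" using t0 frob_eq0[OF cq] by simp
  have zc: "z \<in> carrier_vec m" unfolding z_def by simp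
  have zi: "z $ k = - x $ k / t" if "k < m" for k using that unfolding z_def by simp
  have zqi: "(z $ k) ^ q = - ((x $ k) ^ q) / t ^ q" if "k < m" for k
    using that unfolding zi[OF that] by (simp add: power_divide frob_minus[OF cq])
  define s where "s = (\<Sum>k<m. (x $ k) ^ q * x $ k)"
  have zz1: "(z $ k) ^ q * z $ k = (x $ k) ^ q * x $ k / (t ^ q * t)" if "k < m" for k
  proof -
    have "(z $ k) ^ q * z $ k = (- ((x $ k) ^ q) / t ^ q) * z $ k" by (subst zqi[OF that]) (rule refl)
    also have "\<dots> = (- ((x $ k) ^ q) / t ^ q) * (- x $ k / t)" by (subst zi[OF that]) (rule refl)
    finally show ?thesis by simp
  qed
  have zz: "(\<Sum>k<m. (z $ k) ^ q * z $ k) = s / (t ^ q * t)"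
    unfolding s_def sum_divide_distrib by (rule sum.cong) (auto simp: zz1)
  have M1: "(Dk ?n m + l \<cdot>\<^sub>m (col x * rowc q x)) $$ (i,k) = (if i = k \<and> i < m then 1 else 0) + l * (x $ i * (x $ k) ^ q)"
    if "i < ?n" "k < ?n" for i k using that x outer_index[of i x k x q] by (simp add: Dk_index del: index_mult_mat(1))
  have M2: "(block_z q ?n z + \<mu> \<cdot>\<^sub>m Em ?n) $$ (k,j) = block_z q ?n z $$ (k,j) + (if k = m \<and> j = m then \<mu> else 0)"
    if "k < ?n" "j < ?n" for k j using that block_z_carrier[OF zc, of q] by (simp add: Em_index)
  have lm: "l * t ^ q * \<mu> = 1 / t" unfolding \<mu>_def using l t0 tq by (simp add: field_simps)
  show ?thesis
  proof (rule eq_matI)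
    fix i j assume ij: "i < dim_row (1\<^sub>m ?n :: 'a mat)" "j < dim_col (1\<^sub>m ?n :: 'a mat)"
    then have i: "i < ?n" and j: "j < ?n" by auto
    let ?M1 = "Dk ?n m + l \<cdot>\<^sub>m (col x * rowc q x)"
    let ?M2 = "block_z q ?n z + \<mu> \<cdot>\<^sub>m Em ?n"
    have "(?M1 * ?M2) $$ (i,j) = (\<Sum>k<?n. ?M1 $$ (i,k) * ?M2 $$ (k,j))"
      using i j x block_z_carrier[OF zc, of q] by (simp add: scalar_prod_def lessThan_atLeast0)
    also have "\<dots> = (\<Sum>k<m. ?M1 $$ (i,k) * ?M2 $$ (k,j)) + ?M1 $$ (i,m) * ?M2 $$ (m,j)"
      by simp
    also have "\<dots> = (1\<^sub>m ?n :: 'a mat) $$ (i,j)"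
    proof (cases "i < m")
      case True
      note iT = True
      show ?thesis
      proof (cases "j < m")
        case True
        have "(\<Sum>k<m. ?M1 $$ (i,k) * ?M2 $$ (k,j)) = (\<Sum>k<m. ((if i = k then 1 else 0) + l * (x $ i * (x $ k) ^ q)) * (if k = j then 1 else 0))"
          using iT True by (intro sum.cong refl) (auto simp: M1 M2 block_z_index[OF zc] Em_index q_pos[OF cq])
        also have "\<dots> = (if i = j then 1 else 0) + l * (x $ i * (x $ j) ^ q)"
          using True by (simp add: ring_distribs sum.distrib if_distrib[of "\<lambda>x. x * _"] if_distrib[of "\<lambda>x. _ * x"] cong: if_cong)
        finally show ?thesis using iT True
          by (simp add: M1 M2 block_z_index[OF zc] Em_index q_pos[OF cq] zqi t_def[symmetric] tq t0 field_simps)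
      next
        case False
        then have jm: "j = m" using j by simp
        have "(\<Sum>k<m. ?M1 $$ (i,k) * ?M2 $$ (k,j)) = (\<Sum>k<m. ((if i = k then 1 else 0) + l * (x $ i * (x $ k) ^ q)) * z $ k)"
          using iT jm by (intro sum.cong refl) (auto simp: M1 M2 block_z_index[OF zc] Em_index q_pos[OF cq])
        also have "\<dots> = z $ i + l * x $ i * (\<Sum>k<m. (x $ k) ^ q * z $ k)"
          using iT by (simp add: ring_distribs sum.distrib sum_distrib_left if_distrib[of "\<lambda>x. x * _"] cong: if_cong) (simp add: ac_simps)
        also have "(\<Sum>k<m. (x $ k) ^ q * z $ k) = - s / t"
          unfolding s_def sum_divide_distrib sum_negf[symmetric] by (rule sum.cong) (auto simp: zi)
        finally have S: "(\<Sum>k<m. ?M1 $$ (i,k) * ?M2 $$ (k,j)) = z $ i + l * x $ i * (- s / t)" .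
        have "?M1 $$ (i,m) * ?M2 $$ (m,j) = l * x $ i * t ^ q * (s / (t ^ q * t) + \<mu>)"
          using iT jm by (simp add: M1 M2 block_z_index[OF zc] Em_index q_pos[OF cq] zz t_def)
        also have "\<dots> = l * x $ i * s / t + x $ i * (l * t ^ q * \<mu>)" using t0 tq by (simp add: field_simps)
        also have "\<dots> = l * x $ i * s / t + x $ i / t" unfolding lm by simp
        finally show ?thesis using S iT jm zi[OF iT] by (simp add: field_simps)
      qed
    next
      case False
      then have im: "i = m" using i by simp
      show ?thesis
      proof (cases "j < m")
        case True
        have "(\<Sum>k<m. ?M1 $$ (i,k) * ?M2 $$ (k,j)) = (\<Sum>k<m. (l * (t * (x $ k) ^ q)) * (if k = j then 1 else 0))"
          using im True by (intro sum.cong refl) (auto simp: M1 M2 block_z_index[OF zc] Em_index q_pos[OF cq] t_def)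
        also have "\<dots> = l * (t * (x $ j) ^ q)" using True by (simp add: if_distrib[of "\<lambda>x. _ * x"] cong: if_cong)
        finally show ?thesis using im True
          by (simp add: M1 M2 block_z_index[OF zc] Em_index q_pos[OF cq] zqi t_def[symmetric] tq t0 field_simps)
      next
        case False
        then have jm: "j = m" using j by simp
        have "(\<Sum>k<m. ?M1 $$ (i,k) * ?M2 $$ (k,j)) = (\<Sum>k<m. l * t * ((x $ k) ^ q * z $ k))"
          using im jm by (intro sum.cong refl) (auto simp: M1 M2 block_z_index[OF zc] Em_index q_pos[OF cq] t_def ac_simps)
        also have "\<dots> = l * t * (\<Sum>k<m. (x $ k) ^ q * z $ k)" by (simp add: sum_distrib_left)
        also have "(\<Sum>k<m. (x $ k) ^ q * z $ k) = - s / t"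
          unfolding s_def sum_divide_distrib sum_negf[symmetric] by (rule sum.cong) (auto simp: zi)
        finally have S: "(\<Sum>k<m. ?M1 $$ (i,k) * ?M2 $$ (k,j)) = l * t * (- s / t)" .
        have "?M1 $$ (i,m) * ?M2 $$ (m,j) = l * t * t ^ q * (s / (t ^ q * t) + \<mu>)"
          using im jm by (simp add: M1 M2 block_z_index[OF zc] Em_index q_pos[OF cq] zz t_def)
        also have "\<dots> = l * s + t * (l * t ^ q * \<mu>)" using t0 tq by (simp add: field_simps)
        also have "\<dots> = l * s + 1" unfolding lm using t0 by simp
        finally show ?thesis using S im jm t0 by (simp add: field_simps)
      qed
    qed
    finally show "(?M1 * ?M2) $$ (i,j) = (1\<^sub>m ?n :: 'a mat) $$ (i,j)" .
  qed (use x block_z_carrier[OF zc, of q] in auto)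
qed

end


lemma inv_exists: assumes "(P :: 'a::field mat) \<in> carrier_mat n n" "det P \<noteq> 0"
  shows "\<exists>R. R \<in> carrier_mat n n \<and> P * R = 1\<^sub>m n \<and> R * P = 1\<^sub>m n"
  using det_non_zero_imp_unit[OF assms, of "()"] unfolding Units_def ring_mat_def by auto

lemma sum_if_less: fixes n k :: nat and f :: "nat \<Rightarrow> 'b::comm_monoid_add"
  shows "k \<le> n \<Longrightarrow> (\<Sum>a<n. if a < k then f a else 0) = (\<Sum>a<k. f a)"
proof (induction n)
  case (Suc n)
  then show ?case by (cases "k = Suc n") (auto simp: lessThan_Suc_atMost[symmetric])
qed simp

context
  fixes q :: nat
  assumes cq: "card (UNIV :: 'a::{finite,field} set) = q ^ 2" and q2: "q \<ge> 2"
begin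

lemma adj_inv: assumes "(P :: 'a mat) \<in> carrier_mat n n" "R \<in> carrier_mat n n" "P * R = 1\<^sub>m n"
  shows "adj q R * adj q P = 1\<^sub>m n"
  using adj_mult[OF cq assms(1,2)] assms(3) adj_one[OF cq] by simp

lemma det_adj_nz: assumes "(P :: 'a mat) \<in> carrier_mat n n" "R \<in> carrier_mat n n" "P * R = 1\<^sub>m n"
  shows "det (adj q R) \<noteq> 0"
proof -
  have "det (adj q R) * det (adj q P) = 1"
    using det_mult[of "adj q R" n "adj q P"] adj_inv[OF assms] assms by simp
  then show ?thesis by auto
qed

lemma herm_form: assumes A: "(A :: 'a mat) \<in> carrier_mat n n" and hA: "hermitian q A"
  and r: "vec_space.rank n A = n - 1" and n: "n \<ge> 1"
  shows "\<exists>P R. P \<in> carrier_mat n n \<and> R \<in> carrier_mat n n \<and> P * R = 1\<^sub>m n \<and> R * P = 1\<^sub>m n \<and>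
     A = R * Dk n (n - 1) * adj q R"
proof -
  obtain P k where Pk: "P \<in> carrier_mat n n" "det P \<noteq> 0" "k \<le> n" "P * A * adj q P = Dk n k"
    using classify[OF cq q2 A hA] by blast
  obtain R where R: "R \<in> carrier_mat n n" "P * R = 1\<^sub>m n" "R * P = 1\<^sub>m n"
    using inv_exists[OF Pk(1,2)] by blast
  have "(R * P) * A * adj q (R * P) = R * (P * A * adj q P) * adj q R"
    by (rule congr_comp[OF cq q2]) (use Pk R A in auto)
  then have AF: "A = R * Dk n k * adj q R" using R(3) Pk(4) A by (simp add: adj_one[OF cq])
  have "vec_space.rank n A \<le> card {..<k}"
  proof (rule rank_sum_prod[of _ A n n "\<lambda>a i. R $$ (i,a)" "\<lambda>a j. R $$ (j,a) ^ q"])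
    fix i j assume ij: "i < n" "j < n"
    have "A $$ (i,j) = (\<Sum>a<n. \<Sum>b<n. R $$ (i,a) * Dk n k $$ (a,b) * R $$ (j,b) ^ q)"
      unfolding AF by (rule triple_entry[OF cq]) (use R ij in auto)
    also have "\<dots> = (\<Sum>a<n. if a < k then R $$ (i,a) * R $$ (j,a) ^ q else 0)"
      by (intro sum.cong refl) (auto simp: Dk_index if_distrib[of "\<lambda>x. x * _"] if_distrib[of "\<lambda>x. _ * x"] cong: if_cong)
    also have "\<dots> = (\<Sum>a\<in>{..<k}. R $$ (i,a) * R $$ (j,a) ^ q)" by (rule sum_if_less[OF Pk(3)])
    finally show "A $$ (i,j) = (\<Sum>a\<in>{..<k}. R $$ (i,a) * R $$ (j,a) ^ q)" .
  qed (use A in auto)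
  then have k1: "n - 1 \<le> k" using r by simp
  have kn: "k \<noteq> n"
  proof
    assume "k = n"
    then have D1: "Dk n k = 1\<^sub>m n" by (intro eq_matI) (auto simp: Dk_index)
    have "A = R * 1\<^sub>m n * adj q R" using AF unfolding D1 .
    then have "A = R * adj q R" using R by simp
    then have "det A = det R * det (adj q R)" using det_mult[of R n "adj q R"] R by simp
    moreover have "det R \<noteq> 0" using det_mult[OF Pk(1) R(1)] R(2) by auto
    ultimately have "det A \<noteq> 0" using det_adj_nz[OF Pk(1) R(1,2)] by simp
    then have "vec_space.rank n A = n" using vec_space.det_rank_iff[OF A] by simp
    then show False using r n by simp
  qed
  have "k = n - 1" using k1 kn Pk(3) by simp
  then show ?thesis using Pk R AF by blast
qed


lemma Dk_fix: assumes "(x' :: 'a vec) \<in> carrier_vec (Suc m)" "x' $ m = 0"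
  shows "Dk (Suc m) m *\<^sub>v x' = x'"
proof (rule eq_vecI)
  fix i assume "i < dim_vec x'"
  then have i: "i < Suc m" using assms by simp
  have "(Dk (Suc m) m *\<^sub>v x') $ i = (\<Sum>j<Suc m. (if i = j \<and> i < m then 1 else 0) * x' $ j)"
    using i assms by (simp add: scalar_prod_def lessThan_atLeast0 Dk_index)
  also have "\<dots> = (if i < m then x' $ i else 0)"
    using i by (simp add: if_distrib[of "\<lambda>x. x * _"] cong: if_cong)
  also have "\<dots> = x' $ i" using i assms by (auto simp: less_Suc_eq)
  finally show "(Dk (Suc m) m *\<^sub>v x') $ i = x' $ i" .
qed (use assms in auto)

lemma leaf_analysis:
  assumes P: "(P :: 'a mat) \<in> carrier_mat (Suc m) (Suc m)" and R: "R \<in> carrier_mat (Suc m) (Suc m)"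
    and PR: "P * R = 1\<^sub>m (Suc m)" and RP: "R * P = 1\<^sub>m (Suc m)"
    and AF: "A = R * Dk (Suc m) m * adj q R" and x: "x \<in> carrier_vec (Suc m)"
    and xn: "x \<notin> vec_space.col_space (Suc m) A"
  defines "x' \<equiv> P *\<^sub>v x"
  defines "t \<equiv> x' $ m"
  defines "z \<equiv> vec m (\<lambda>i. - x' $ i / t)"
  shows "t \<noteq> 0"
    and "\<And>l. l \<noteq> 0 \<Longrightarrow> (A + l \<cdot>\<^sub>m (col x * rowc q x)) *
            (adj q P * (block_z q (Suc m) z + (1 / (l * t ^ q * t)) \<cdot>\<^sub>m Em (Suc m)) * P) = 1\<^sub>m (Suc m)"
proof -
  have x'c: "x' \<in> carrier_vec (Suc m)" unfolding x'_def using P x by simp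
  have xR: "R *\<^sub>v x' = x" unfolding x'_def using R P x RP by (simp flip: assoc_mult_mat_vec)
  have aRP: "adj q R * adj q P = 1\<^sub>m (Suc m)" by (rule adj_inv[OF P R PR])
  have RD: "R * Dk (Suc m) m \<in> carrier_mat (Suc m) (Suc m)" using R by (rule mult_carrier_mat) simp
  have A: "A \<in> carrier_mat (Suc m) (Suc m)" unfolding AF using RD adj_carrier[OF R] by (rule mult_carrier_mat)
  show t0: "t \<noteq> 0"
  proof
    assume "t = 0"
    then have D: "Dk (Suc m) m *\<^sub>v x' = x'" using Dk_fix[OF x'c] unfolding t_def by simp
    define w where "w = adj q P *\<^sub>v x'"
    have wc: "w \<in> carrier_vec (Suc m)" unfolding w_def by (rule mult_mat_vec_carrier[OF adj_carrier[OF P] x'c])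
    have "A *\<^sub>v w = R *\<^sub>v (Dk (Suc m) m *\<^sub>v ((adj q R * adj q P) *\<^sub>v x'))"
      unfolding AF w_def using R P x'c RD wc[unfolded w_def] mult_mat_vec_carrier[OF adj_carrier[OF R] wc[unfolded w_def]] by (simp add: assoc_mult_mat_vec[of _ "Suc m" "Suc m" _ "Suc m"])
    also have "\<dots> = x" unfolding aRP using x'c D xR by simp
    finally have "A *\<^sub>v w = x" .
    then have "x \<in> vec_space.col_space (Suc m) A"
      using vec_space.col_space_eq[OF A] wc x A by auto
    then show False using xn by simp
  qed
  fix l :: 'a assume l: "l \<noteq> 0"
  define Ox where "Ox = col x' * rowc q x'"
  have Oxc: "Ox \<in> carrier_mat (Suc m) (Suc m)" unfolding Ox_def using x'c by (auto intro!: mult_carrier_mat)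
  have colx: "col x = R * col x'" using col_mult[OF R x'c] xR by simp
  have rowx: "rowc q x = rowc q x' * adj q R"
    unfolding rowc_def colx using adj_mult[OF cq R col_carrier[OF x'c]] by simp
  have "col x * rowc q x = R * Ox * adj q R"
  proof -
    have cc: "col x' \<in> carrier_mat (Suc m) 1" by (rule col_carrier[OF x'c])
    have rc: "rowc q x' \<in> carrier_mat 1 (Suc m)" by (rule rowc_carrier[OF x'c])
    have ac: "adj q R \<in> carrier_mat (Suc m) (Suc m)" using R by simp
    have ra: "rowc q x' * adj q R \<in> carrier_mat 1 (Suc m)" using rc ac by (rule mult_carrier_mat)
    have "R * col x' * (rowc q x' * adj q R) = R * (col x' * (rowc q x' * adj q R))"
      by (rule assoc_mult_mat[OF R cc ra])
    also have "col x' * (rowc q x' * adj q R) = (col x' * rowc q x') * adj q R"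
      by (rule assoc_mult_mat[OF cc rc ac, symmetric])
    also have "R * ((col x' * rowc q x') * adj q R) = R * (col x' * rowc q x') * adj q R"
      by (rule assoc_mult_mat[OF R _ ac, symmetric]) (use Oxc in \<open>simp add: Ox_def\<close>)
    finally show ?thesis unfolding colx rowx Ox_def .
  qed
  then have XF: "A + l \<cdot>\<^sub>m (col x * rowc q x) = R * (Dk (Suc m) m + l \<cdot>\<^sub>m Ox) * adj q R"
  proof -
    have Dc: "Dk (Suc m) m \<in> carrier_mat (Suc m) (Suc m)" by simp
    have lOc: "l \<cdot>\<^sub>m Ox \<in> carrier_mat (Suc m) (Suc m)" using Oxc by simp
    have ac: "adj q R \<in> carrier_mat (Suc m) (Suc m)" using R by simp
    have "R * (Dk (Suc m) m + l \<cdot>\<^sub>m Ox) = R * Dk (Suc m) m + R * (l \<cdot>\<^sub>m Ox)"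
      by (rule mult_add_distrib_mat[OF R Dc lOc])
    also have "R * (l \<cdot>\<^sub>m Ox) = l \<cdot>\<^sub>m (R * Ox)" by (rule mult_smult_distrib[OF R Oxc])
    finally have e1: "R * (Dk (Suc m) m + l \<cdot>\<^sub>m Ox) = R * Dk (Suc m) m + l \<cdot>\<^sub>m (R * Ox)" .
    have RDc: "R * Dk (Suc m) m \<in> carrier_mat (Suc m) (Suc m)" using R by simp
    have ROc: "l \<cdot>\<^sub>m (R * Ox) \<in> carrier_mat (Suc m) (Suc m)" using R Oxc by simp
    have "R * (Dk (Suc m) m + l \<cdot>\<^sub>m Ox) * adj q R = R * Dk (Suc m) m * adj q R + l \<cdot>\<^sub>m (R * Ox) * adj q R"
      unfolding e1 by (rule add_mult_distrib_mat[OF RDc ROc ac])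
    also have "l \<cdot>\<^sub>m (R * Ox) * adj q R = l \<cdot>\<^sub>m (R * Ox * adj q R)"
      by (rule mult_smult_assoc_mat) (use R Oxc ac in auto)
    finally show ?thesis unfolding AF \<open>col x * rowc q x = R * Ox * adj q R\<close> by simp
  qed
  define M1 where "M1 = Dk (Suc m) m + l \<cdot>\<^sub>m Ox"
  define M2 where "M2 = block_z q (Suc m) z + (1 / (l * t ^ q * t)) \<cdot>\<^sub>m Em (Suc m)"
  have zc: "z \<in> carrier_vec m" unfolding z_def by simp
  have M1c: "M1 \<in> carrier_mat (Suc m) (Suc m)" unfolding M1_def using Oxc by simp
  have M2c: "M2 \<in> carrier_mat (Suc m) (Suc m)" unfolding M2_def using block_z_carrier[OF zc] by simp
  have M12: "M1 * M2 = 1\<^sub>m (Suc m)"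
    unfolding M1_def M2_def Ox_def z_def using core[OF cq x'c t0[unfolded t_def] l] unfolding t_def .
  have "(R * M1 * adj q R) * (adj q P * M2 * P) = R * (M1 * ((adj q R * adj q P) * (M2 * P)))"
    using R P M1c M2c by (simp add: assoc_mult_mat[of _ "Suc m" "Suc m" _ "Suc m" _ "Suc m"] mult_carrier_mat[of _ "Suc m" "Suc m"])
  also have "\<dots> = R * ((M1 * M2) * P)" unfolding aRP using M1c M2c P by simp
  also have "\<dots> = 1\<^sub>m (Suc m)" unfolding M12 using R P RP by simp
  finally show "(A + l \<cdot>\<^sub>m (col x * rowc q x)) *
            (adj q P * (block_z q (Suc m) z + (1 / (l * t ^ q * t)) \<cdot>\<^sub>m Em (Suc m)) * P) = 1\<^sub>m (Suc m)"
    unfolding XF M1_def[symmetric] M2_def[symmetric] .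
qed

end


context
  fixes q :: nat
  assumes cq: "card (UNIV :: 'a::{finite,field} set) = q ^ 2" and q2: "q \<ge> 2"
begin

lemma congr_add: assumes "(Q :: 'a mat) \<in> carrier_mat n n" "B \<in> carrier_mat n n" "C \<in> carrier_mat n n"
  shows "Q * B * adj q Q + Q * C * adj q Q = Q * (B + C) * adj q Q"
proof (rule eq_matI)
  fix i j assume "i < dim_row (Q * (B + C) * adj q Q)" "j < dim_col (Q * (B + C) * adj q Q)"
  then have ij: "i < n" "j < n" using assms by auto
  show "(Q * B * adj q Q + Q * C * adj q Q) $$ (i,j) = (Q * (B + C) * adj q Q) $$ (i,j)"
  proof -
    have "(Q * (B + C) * adj q Q) $$ (i,j) = (\<Sum>k<n. \<Sum>l<n. Q $$ (i,k) * (B + C) $$ (k,l) * Q $$ (j,l) ^ q)"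
      by (rule triple_entry[OF cq assms(1) add_carrier_mat[OF assms(3), of B] assms(1) ij])
    also have "\<dots> = (\<Sum>k<n. \<Sum>l<n. Q $$ (i,k) * B $$ (k,l) * Q $$ (j,l) ^ q + Q $$ (i,k) * C $$ (k,l) * Q $$ (j,l) ^ q)"
      using assms by (intro sum.cong refl) (auto simp: distrib_left distrib_right)
    also have "\<dots> = (\<Sum>k<n. \<Sum>l<n. Q $$ (i,k) * B $$ (k,l) * Q $$ (j,l) ^ q) + (\<Sum>k<n. \<Sum>l<n. Q $$ (i,k) * C $$ (k,l) * Q $$ (j,l) ^ q)"
      by (simp only: sum.distrib)
    finally show ?thesis using ij assms triple_entry[OF cq assms(1,2,1) ij] triple_entry[OF cq assms(1,3,1) ij] by simp
  qed
qed (use assms in auto)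

lemma congr_minus: assumes "(Q :: 'a mat) \<in> carrier_mat n n" "B \<in> carrier_mat n n" "C \<in> carrier_mat n n"
  shows "Q * B * adj q Q - Q * C * adj q Q = Q * (B - C) * adj q Q"
proof (rule eq_matI)
  fix i j assume "i < dim_row (Q * (B - C) * adj q Q)" "j < dim_col (Q * (B - C) * adj q Q)"
  then have ij: "i < n" "j < n" using assms by auto
  show "(Q * B * adj q Q - Q * C * adj q Q) $$ (i,j) = (Q * (B - C) * adj q Q) $$ (i,j)"
    using ij assms triple_entry[OF cq assms(1,2,1) ij] triple_entry[OF cq assms(1,3,1) ij]
      triple_entry[OF cq assms(1) minus_carrier_mat[OF assms(3)] assms(1) ij, of B]
    by (simp add: sum_subtractf[symmetric] right_diff_distrib left_diff_distrib)
qed (use assms in auto)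

lemma congr_smult: assumes "(Q :: 'a mat) \<in> carrier_mat n n" "B \<in> carrier_mat n n"
  shows "c \<cdot>\<^sub>m (Q * B * adj q Q) = Q * (c \<cdot>\<^sub>m B) * adj q Q"
proof (rule eq_matI)
  fix i j assume "i < dim_row (Q * (c \<cdot>\<^sub>m B) * adj q Q)" "j < dim_col (Q * (c \<cdot>\<^sub>m B) * adj q Q)"
  then have ij: "i < n" "j < n" using assms by auto
  show "(c \<cdot>\<^sub>m (Q * B * adj q Q)) $$ (i,j) = (Q * (c \<cdot>\<^sub>m B) * adj q Q) $$ (i,j)"
    using ij assms triple_entry[OF cq assms(1,2,1) ij]
      triple_entry[OF cq assms(1) smult_carrier_mat[OF assms(2)] assms(1) ij, of c]
    by (simp add: sum_distrib_left ac_simps)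
qed (use assms in auto)

lemma triple_rank_bound: assumes Q: "(Q :: 'a mat) \<in> carrier_mat n n" and Z: "Z \<in> carrier_mat n n" and K: "finite K"
  and ent: "\<And>k l. k < n \<Longrightarrow> l < n \<Longrightarrow> Z $$ (k,l) = (\<Sum>a\<in>K. f a k * g a l)"
  shows "vec_space.rank n (Q * Z * adj q Q) \<le> card K"
proof (rule rank_sum_prod[OF K, of _ n n "\<lambda>a i. \<Sum>k<n. Q $$ (i,k) * f a k" "\<lambda>a j. \<Sum>l<n. g a l * Q $$ (j,l) ^ q"])
  fix i j assume ij: "i < n" "j < n"
  have "(Q * Z * adj q Q) $$ (i,j) = (\<Sum>k<n. \<Sum>l<n. Q $$ (i,k) * Z $$ (k,l) * Q $$ (j,l) ^ q)"
    by (rule triple_entry[OF cq Q Z Q ij])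
  also have "\<dots> = (\<Sum>k<n. \<Sum>l<n. \<Sum>a\<in>K. (Q $$ (i,k) * f a k) * (g a l * Q $$ (j,l) ^ q))"
    by (intro sum.cong refl) (simp add: ent sum_distrib_left sum_distrib_right ac_simps)
  also have "\<dots> = (\<Sum>k<n. \<Sum>a\<in>K. \<Sum>l<n. (Q $$ (i,k) * f a k) * (g a l * Q $$ (j,l) ^ q))"
    by (rule sum.cong[OF refl], rule sum.swap)
  also have "\<dots> = (\<Sum>a\<in>K. \<Sum>k<n. \<Sum>l<n. (Q $$ (i,k) * f a k) * (g a l * Q $$ (j,l) ^ q))"
    by (rule sum.swap)
  also have "\<dots> = (\<Sum>a\<in>K. (\<Sum>k<n. Q $$ (i,k) * f a k) * (\<Sum>l<n. g a l * Q $$ (j,l) ^ q))"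
    by (simp add: sum_product)
  finally show "(Q * Z * adj q Q) $$ (i,j) = (\<Sum>a\<in>K. (\<Sum>k<n. Q $$ (i,k) * f a k) * (\<Sum>l<n. g a l * Q $$ (j,l) ^ q))" .
qed (use Q Z in auto)


lemma det_block_nz: assumes x: "(x :: 'a vec) \<in> carrier_vec (Suc m)" and t: "x $ m \<noteq> 0" and g: "g \<noteq> 0"
  shows "det (block_z q (Suc m) (vec m (\<lambda>i. - x $ i / x $ m)) + g \<cdot>\<^sub>m Em (Suc m)) \<noteq> 0"
proof -
  let ?t = "x $ m"
  have tq: "?t ^ q \<noteq> 0" using t frob_eq0[OF cq] by simp
  define l where "l = 1 / (g * ?t ^ q * ?t)"
  have l0: "l \<noteq> 0" unfolding l_def using g t tq by simp
  have gl: "1 / (l * ?t ^ q * ?t) = g" unfolding l_def using g t tq by (simp add: field_simps)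
  let ?M1 = "Dk (Suc m) m + l \<cdot>\<^sub>m (col x * rowc q x)"
  let ?M2 = "block_z q (Suc m) (vec m (\<lambda>i. - x $ i / x $ m)) + g \<cdot>\<^sub>m Em (Suc m)"
  have e: "?M1 * ?M2 = 1\<^sub>m (Suc m)" using core[OF cq x t l0] unfolding gl .
  have c1: "?M1 \<in> carrier_mat (Suc m) (Suc m)" using x by (auto intro!: mult_carrier_mat simp: rowc_carrier)
  have c2: "?M2 \<in> carrier_mat (Suc m) (Suc m)" using block_z_carrier[of "vec m (\<lambda>i. - x $ i / x $ m)" m q] by simp
  have "det ?M1 * det ?M2 = 1" using det_mult[OF c1 c2] e by simp
  then show ?thesis by auto
qed

lemma base_unique:
  assumes Q: "(Q :: 'a mat) \<in> carrier_mat (Suc m) (Suc m)" and Qi: "Qi \<in> carrier_mat (Suc m) (Suc m)"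
    and QiQ: "Qi * Q = 1\<^sub>m (Suc m)"
    and B: "B \<in> carrier_mat (Suc m) (Suc m)" and Bnz: "\<And>g. g \<noteq> 0 \<Longrightarrow> det (B + g \<cdot>\<^sub>m Em (Suc m)) \<noteq> 0"
    and N: "N \<in> carrier_mat (Suc m) (Suc m)" and rN: "vec_space.rank (Suc m) N = m"
    and H: "H \<in> carrier_mat (Suc m) (Suc m)" and mu: "\<mu>1 \<noteq> \<mu>2"
    and e1: "Q * (B + \<mu>1 \<cdot>\<^sub>m Em (Suc m)) * adj q Q = N + c1 \<cdot>\<^sub>m H"
    and e2: "Q * (B + \<mu>2 \<cdot>\<^sub>m Em (Suc m)) * adj q Q = N + c2 \<cdot>\<^sub>m H"
  shows "N = Q * B * adj q Q"
proof -
  let ?n = "Suc m"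
  define N0 where "N0 = Q * B * adj q Q"
  define G where "G = Q * Em ?n * adj q Q"
  have N0c: "N0 \<in> carrier_mat ?n ?n" unfolding N0_def using Q B by auto
  have Gc: "G \<in> carrier_mat ?n ?n" unfolding G_def using Q by auto
  have split: "Q * (B + c \<cdot>\<^sub>m Em ?n) * adj q Q = N0 + c \<cdot>\<^sub>m G" for c
    unfolding N0_def G_def using congr_add[OF Q B, of "c \<cdot>\<^sub>m Em ?n"] congr_smult[OF Q, of "Em ?n" c] by simp
  have E1: "N0 $$ (i,j) + \<mu>1 * G $$ (i,j) = N $$ (i,j) + c1 * H $$ (i,j)" if "i < ?n" "j < ?n" for i j
    using arg_cong[OF e1[unfolded split], of "\<lambda>M. M $$ (i,j)"] that N0c Gc N H by simp
  have E2: "N0 $$ (i,j) + \<mu>2 * G $$ (i,j) = N $$ (i,j) + c2 * H $$ (i,j)" if "i < ?n" "j < ?n" for i j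
    using arg_cong[OF e2[unfolded split], of "\<lambda>M. M $$ (i,j)"] that N0c Gc N H by simp
  have Gnz: "\<exists>i<?n. \<exists>j<?n. G $$ (i,j) \<noteq> 0"
  proof (rule ccontr)
    assume "\<not> ?thesis"
    then have G0: "G = 0\<^sub>m ?n ?n" using Gc by (intro eq_matI) auto
    have "(Qi * Q) * Em ?n * adj q (Qi * Q) = Qi * G * adj q Qi"
      unfolding G_def by (rule congr_comp[OF cq q2]) (use Q Qi in auto)
    then have "Em ?n = Qi * G * adj q Qi" using QiQ by (simp add: adj_one[OF cq])
    also have "\<dots> = 0\<^sub>m ?n ?n" unfolding G0 using Qi by simp
    finally have "Em ?n $$ (m,m) = (0\<^sub>m ?n ?n :: 'a mat) $$ (m,m)" by simp
    then show False by (simp add: Em_index)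
  qed
  then obtain i0 j0 where ij0: "i0 < ?n" "j0 < ?n" "G $$ (i0,j0) \<noteq> 0" by blast
  have c12: "c1 \<noteq> c2"
  proof
    assume "c1 = c2"
    then have "N0 $$ (i0,j0) + \<mu>1 * G $$ (i0,j0) = N0 $$ (i0,j0) + \<mu>2 * G $$ (i0,j0)"
      using E1[OF ij0(1,2)] E2[OF ij0(1,2)] by simp
    then have "\<mu>1 * G $$ (i0,j0) = \<mu>2 * G $$ (i0,j0)" by simp
    then show False using mu ij0 by simp
  qed
  define \<gamma> where "\<gamma> = \<mu>1 - c1 * (\<mu>1 - \<mu>2) / (c1 - c2)"
  have NF: "N = Q * (B + \<gamma> \<cdot>\<^sub>m Em ?n) * adj q Q"
  proof -
    have "N = N0 + \<gamma> \<cdot>\<^sub>m G"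
    proof (rule eq_matI)
      fix i j assume "i < dim_row (N0 + \<gamma> \<cdot>\<^sub>m G)" "j < dim_col (N0 + \<gamma> \<cdot>\<^sub>m G)"
      then have ij: "i < ?n" "j < ?n" using N0c Gc by auto
      have "(N0 $$ (i,j) + \<mu>1 * G $$ (i,j)) - (N0 $$ (i,j) + \<mu>2 * G $$ (i,j)) =
            (N $$ (i,j) + c1 * H $$ (i,j)) - (N $$ (i,j) + c2 * H $$ (i,j))" using E1[OF ij] E2[OF ij] by simp
      then have "(\<mu>1 - \<mu>2) * G $$ (i,j) = (c1 - c2) * H $$ (i,j)" by (simp add: algebra_simps)
      then have H: "H $$ (i,j) = (\<mu>1 - \<mu>2) * G $$ (i,j) / (c1 - c2)"
        using c12 by (simp add: field_simps)
      show "N $$ (i,j) = (N0 + \<gamma> \<cdot>\<^sub>m G) $$ (i,j)"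
        using E1[OF ij] ij N0c Gc c12 unfolding \<gamma>_def H by (simp add: field_simps)
    qed (use N N0c Gc in auto)
    then show ?thesis using split by simp
  qed
  have "\<gamma> = 0"
  proof (rule ccontr)
    assume g: "\<gamma> \<noteq> 0"
    have BE: "B + \<gamma> \<cdot>\<^sub>m Em ?n \<in> carrier_mat ?n ?n" using B by simp
    have dQ: "det Q \<noteq> 0" using det_mult[OF Qi Q] QiQ by auto
    have daQ: "det (adj q Q) \<noteq> 0" by (rule det_adj_nz[OF cq q2 Qi Q QiQ])
    have QB: "Q * (B + \<gamma> \<cdot>\<^sub>m Em ?n) \<in> carrier_mat ?n ?n" using Q BE by (rule mult_carrier_mat)
    have "det N = det Q * det (B + \<gamma> \<cdot>\<^sub>m Em ?n) * det (adj q Q)"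
      unfolding NF using det_mult[OF QB adj_carrier[OF Q]] det_mult[OF Q BE] by simp
    then have "det N \<noteq> 0" using dQ daQ Bnz[OF g] by simp
    then have "vec_space.rank ?n N = ?n" using vec_space.det_rank_iff[OF N] by simp
    then show False using rN by simp
  qed
  moreover have "B + 0 \<cdot>\<^sub>m Em ?n = B" by (rule eq_matI) (use B in auto)
  ultimately show ?thesis using NF by simp
qed


lemma mv_entry: assumes "(Z :: 'a mat) \<in> carrier_mat n n" "v \<in> carrier_vec n" "k < n"
  shows "(Z *\<^sub>v v) $ k = (\<Sum>l<n. Z $$ (k,l) * v $ l)"
  using assms by (simp add: scalar_prod_def lessThan_atLeast0)

lemma rank_two:
  assumes Q: "(Q :: 'a mat) \<in> carrier_mat (Suc m) (Suc m)" and Qi: "Qi \<in> carrier_mat (Suc m) (Suc m)"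
    and QiQ: "Qi * Q = 1\<^sub>m (Suc m)"
    and z1: "z1 \<in> carrier_vec m" and z2: "z2 \<in> carrier_vec m" and z12: "z1 \<noteq> z2"
  shows "vec_space.rank (Suc m) (Q * block_z q (Suc m) z1 * adj q Q - Q * block_z q (Suc m) z2 * adj q Q) = 2"
proof -
  let ?n = "Suc m"
  let ?B1 = "block_z q ?n z1" and ?B2 = "block_z q ?n z2"
  have B1: "?B1 \<in> carrier_mat ?n ?n" and B2: "?B2 \<in> carrier_mat ?n ?n" using block_z_carrier z1 z2 by auto
  define \<Delta> where "\<Delta> = ?B1 - ?B2"
  have Dc: "\<Delta> \<in> carrier_mat ?n ?n" unfolding \<Delta>_def by (rule minus_carrier_mat[OF B2])
  have MF: "Q * ?B1 * adj q Q - Q * ?B2 * adj q Q = Q * \<Delta> * adj q Q"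
    unfolding \<Delta>_def by (rule congr_minus[OF Q B1 B2])
  define w where "w k = z1 $ k - z2 $ k" for k
  define c where "c = (\<Sum>k<m. (z1 $ k) ^ q * z1 $ k) - (\<Sum>k<m. (z2 $ k) ^ q * z2 $ k)"
  define dl where "dl k l = (if k < m then (if l < m then 0 else w k) else (if l < m then (w l) ^ q else c))" for k l
  have Dent: "\<Delta> $$ (k,l) = dl k l" if "k < ?n" "l < ?n" for k l
    using that B1 B2 block_z_index[OF z1, of k l q] block_z_index[OF z2, of k l q]
    unfolding \<Delta>_def dl_def w_def c_def by (auto simp: frob_diff[OF cq])
  obtain r where r: "r < m" "w r \<noteq> 0"
  proof -
    have "\<exists>r<m. w r \<noteq> 0"
    proof (rule ccontr)
      assume "\<not> ?thesis"
      then have "z1 = z2" using z1 z2 unfolding w_def by (intro eq_vecI) auto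
      then show False using z12 by simp
    qed
    then show ?thesis using that by blast
  qed
  have up: "vec_space.rank ?n (Q * \<Delta> * adj q Q) \<le> card {0::nat, 1}"
  proof (rule triple_rank_bound[OF Q Dc, of _
        "\<lambda>a k. if a = 0 then (if k < m then w k else 0) else (if k = m then 1 else 0)"
        "\<lambda>a l. if a = 0 then (if l = m then 1 else 0) else (if l < m then (w l) ^ q else c)"])
    fix k l assume kl: "k < ?n" "l < ?n"
    show "\<Delta> $$ (k,l) = (\<Sum>a\<in>{0::nat,1}. (if a = 0 then (if k < m then w k else 0) else (if k = m then 1 else 0)) *
        (if a = 0 then (if l = m then 1 else 0) else (if l < m then (w l) ^ q else c)))"
      using kl unfolding Dent[OF kl] dl_def by auto
  qed simp
  have low: "\<not> vec_space.rank ?n (Q * \<Delta> * adj q Q) \<le> 1"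
  proof
    assume r1: "vec_space.rank ?n (Q * \<Delta> * adj q Q) \<le> 1"
    define Y where "Y = mat ?n ?n (\<lambda>(k,l). if k = l \<and> k < m \<and> k \<noteq> r then 1 else (0::'a))"
    have Yc: "Y \<in> carrier_mat ?n ?n" unfolding Y_def by simp
    have rT: "vec_space.rank ?n (Q * Y * adj q Q) \<le> card ({..<m} - {r})"
    proof (rule triple_rank_bound[OF Q Yc, of _ "\<lambda>a k. if k = a then 1 else 0" "\<lambda>a l. if l = a then 1 else 0"])
      fix k l assume kl: "k < ?n" "l < ?n"
      show "Y $$ (k,l) = (\<Sum>a\<in>{..<m} - {r}. (if k = a then 1 else 0) * (if l = a then 1 else 0))"
        using kl unfolding Y_def by (auto simp: if_distrib[of "\<lambda>x. x * _"] cong: if_cong)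
    qed simp
    have cT: "card ({..<m} - {r}) = m - 1" using r by simp
    have DY: "\<Delta> + Y \<in> carrier_mat ?n ?n" using Dc Yc by simp
    have detDY: "det (\<Delta> + Y) \<noteq> 0"
    proof
      assume "det (\<Delta> + Y) = 0"
      then obtain v where v: "v \<in> carrier_vec ?n" "v \<noteq> 0\<^sub>v ?n" "(\<Delta> + Y) *\<^sub>v v = 0\<^sub>v ?n"
        using det_0_iff_vec_prod_zero[OF DY] by blast
      have ent: "(\<Sum>l<?n. (\<Delta> + Y) $$ (k,l) * v $ l) = 0" if "k < ?n" for k
        using mv_entry[OF DY v(1) that] v(3) that by simp
      have DYent: "(\<Delta> + Y) $$ (k,l) = dl k l + (if k = l \<and> k < m \<and> k \<noteq> r then 1 else 0)"
        if "k < ?n" "l < ?n" for k l using that Dc Yc Dent unfolding Y_def by simp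
      have vm: "v $ m = 0"
      proof -
        have "0 = (\<Sum>l<?n. (\<Delta> + Y) $$ (r,l) * v $ l)" using ent[of r] r by simp
        also have "\<dots> = (\<Sum>l<m. (\<Delta> + Y) $$ (r,l) * v $ l) + (\<Delta> + Y) $$ (r,m) * v $ m" by simp
        also have "(\<Sum>l<m. (\<Delta> + Y) $$ (r,l) * v $ l) = 0"
          using r by (intro sum.neutral) (auto simp: DYent dl_def)
        also have "(\<Delta> + Y) $$ (r,m) = w r" using r by (simp add: DYent dl_def)
        finally show ?thesis using r by simp
      qed
      have vk: "v $ k = 0" if "k < m" "k \<noteq> r" for k
      proof -
        have "0 = (\<Sum>l<?n. (\<Delta> + Y) $$ (k,l) * v $ l)" using ent[of k] that by simp
        also have "\<dots> = (\<Sum>l<m. (\<Delta> + Y) $$ (k,l) * v $ l) + (\<Delta> + Y) $$ (k,m) * v $ m" by simp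
        also have "(\<Sum>l<m. (\<Delta> + Y) $$ (k,l) * v $ l) = (\<Sum>l<m. if l = k then v $ l else 0)"
          using that by (intro sum.cong refl) (auto simp: DYent dl_def)
        also have "\<dots> = v $ k" using that by simp
        finally show ?thesis using vm by simp
      qed
      have vr: "v $ r = 0"
      proof -
        have "0 = (\<Sum>l<?n. (\<Delta> + Y) $$ (m,l) * v $ l)" using ent[of m] by simp
        also have "\<dots> = (\<Sum>l<m. (\<Delta> + Y) $$ (m,l) * v $ l) + (\<Delta> + Y) $$ (m,m) * v $ m" by simp
        also have "(\<Sum>l<m. (\<Delta> + Y) $$ (m,l) * v $ l) = (\<Sum>l<m. if l = r then (w r) ^ q * v $ r else 0)"
          using vk by (intro sum.cong refl) (auto simp: DYent dl_def)
        also have "\<dots> = (w r) ^ q * v $ r" using r by simp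
        finally have "(w r) ^ q * v $ r = 0" using vm by simp
        then show ?thesis using r frob_eq0[OF cq, of "w r"] by simp
      qed
      have "v = 0\<^sub>v ?n"
      proof (rule eq_vecI)
        fix k assume "k < dim_vec (0\<^sub>v ?n :: 'a vec)"
        then have k: "k < ?n" by simp
        show "v $ k = 0\<^sub>v ?n $ k"
          using k vm vk vr by (cases "k = m"; cases "k = r") (auto simp: less_Suc_eq)
      qed (use v in auto)
      then show False using v by simp
    qed
    have sumF: "Q * \<Delta> * adj q Q + Q * Y * adj q Q = Q * (\<Delta> + Y) * adj q Q" by (rule congr_add[OF Q Dc Yc])
    have dQ: "det Q \<noteq> 0" using det_mult[OF Qi Q] QiQ by auto
    have daQ: "det (adj q Q) \<noteq> 0" by (rule det_adj_nz[OF cq q2 Qi Q QiQ])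
    have QB: "Q * (\<Delta> + Y) \<in> carrier_mat ?n ?n" using Q DY by (rule mult_carrier_mat)
    have SC: "Q * (\<Delta> + Y) * adj q Q \<in> carrier_mat ?n ?n" using QB adj_carrier[OF Q] by (rule mult_carrier_mat)
    have "det (Q * (\<Delta> + Y) * adj q Q) = det Q * det (\<Delta> + Y) * det (adj q Q)"
      using det_mult[OF QB adj_carrier[OF Q]] det_mult[OF Q DY] by simp
    then have "det (Q * (\<Delta> + Y) * adj q Q) \<noteq> 0" using dQ daQ detDY by simp
    then have full: "vec_space.rank ?n (Q * (\<Delta> + Y) * adj q Q) = ?n" using vec_space.det_rank_iff[OF SC] by simp
    have c1: "Q * \<Delta> * adj q Q \<in> carrier_mat ?n ?n" using Q Dc by auto
    have c2: "Q * Y * adj q Q \<in> carrier_mat ?n ?n" using Q Yc by auto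
    have "vec_space.rank ?n (Q * (\<Delta> + Y) * adj q Q) \<le> vec_space.rank ?n (Q * \<Delta> * adj q Q) + vec_space.rank ?n (Q * Y * adj q Q)"
      unfolding sumF[symmetric] by (rule vec_space.rank_subadditive[OF c1 c2])
    then show False using full r1 rT cT r by simp
  qed
  show ?thesis unfolding MF using up low by simp
qed

end


lemma two_elems: assumes "2 \<le> card S" shows "\<exists>a\<in>S. \<exists>b\<in>S. a \<noteq> b"
proof -
  have f: "finite S" using assms card.infinite by fastforce
  then have "S \<noteq> {}" using assms by auto
  then obtain a where a: "a \<in> S" by blast
  have "card (S - {a}) = card S - 1" using a f by simp
  then have "card (S - {a}) > 0" using assms by simp
  then have "S - {a} \<noteq> {}" by (metis card.empty less_irrefl)
  then obtain b where "b \<in> S - {a}" by blast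
  then show ?thesis using a by blast
qed

context
  fixes q :: nat
  assumes cq: "card (UNIV :: 'a::{finite,field} set) = q ^ 2" and q3: "q \<ge> 3"
begin

lemma q2': "q \<ge> 2" using q3 by simp

lemma N_from_leaf:
  assumes P: "(P :: 'a mat) \<in> carrier_mat (Suc m) (Suc m)" and R: "R \<in> carrier_mat (Suc m) (Suc m)"
    and PR: "P * R = 1\<^sub>m (Suc m)" and RP: "R * P = 1\<^sub>m (Suc m)"
    and AF: "A = R * Dk (Suc m) m * adj q R" and x: "x \<in> carrier_vec (Suc m)"
    and xn: "x \<notin> vec_space.col_space (Suc m) A"
    and L: "L = {A + c \<cdot>\<^sub>m (col x * rowc q x) | c. c \<noteq> 0 \<and> c \<in> fixed_field q}"
    and N: "N \<in> carrier_mat (Suc m) (Suc m)" and rN: "vec_space.rank (Suc m) N = m"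
    and lf: "is_leaf q (Suc m) N (inv_set (Suc m) L)"
  shows "N = adj q P * block_z q (Suc m) (vec m (\<lambda>i. - (P *\<^sub>v x) $ i / (P *\<^sub>v x) $ m)) * adj q (adj q P)"
proof -
  let ?n = "Suc m"
  define x' where "x' = P *\<^sub>v x"
  define t where "t = x' $ m"
  define z where "z = vec m (\<lambda>i. - x' $ i / t)"
  define B where "B = block_z q ?n z"
  define Q where "Q = adj q P"
  have x'c: "x' \<in> carrier_vec ?n" unfolding x'_def using P x by simp
  have t0: "t \<noteq> 0" unfolding t_def x'_def by (rule leaf_analysis(1)[OF cq q2' P R PR RP AF x xn])
  have inv: "\<And>l. l \<noteq> 0 \<Longrightarrow> (A + l \<cdot>\<^sub>m (col x * rowc q x)) * (adj q P * (B + (1 / (l * t ^ q * t)) \<cdot>\<^sub>m Em ?n) * P) = 1\<^sub>m ?n"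
    unfolding B_def z_def t_def x'_def by (rule leaf_analysis(2)[OF cq q2' P R PR RP AF x xn])
  have zc: "z \<in> carrier_vec m" unfolding z_def by simp
  have Bc: "B \<in> carrier_mat ?n ?n" unfolding B_def by (rule block_z_carrier[OF zc])
  have Qc: "Q \<in> carrier_mat ?n ?n" unfolding Q_def using P by simp
  have Qic: "adj q R \<in> carrier_mat ?n ?n" using R by simp
  have QiQ: "adj q R * Q = 1\<^sub>m ?n" unfolding Q_def by (rule adj_inv[OF cq q2' P R PR])
  have aQ: "adj q Q = P" unfolding Q_def by (rule adj_adj[OF cq])
  have A: "A \<in> carrier_mat ?n ?n"
  proof -
    have "R * Dk (Suc m) m \<in> carrier_mat ?n ?n" using R by (rule mult_carrier_mat) simp
    then show ?thesis unfolding AF using adj_carrier[OF R] by (rule mult_carrier_mat)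
  qed
  obtain y where y: "y \<in> carrier_vec ?n"
    and IL: "inv_set ?n L = {N + c \<cdot>\<^sub>m (col y * rowc q y) | c. c \<noteq> 0 \<and> c \<in> fixed_field q}"
    using lf unfolding is_leaf_def by blast
  define H where "H = col y * rowc q y"
  have Hc: "H \<in> carrier_mat ?n ?n" unfolding H_def using y by (auto intro!: mult_carrier_mat simp: rowc_carrier)
  have "card (Fqs q :: 'a set) = q - 1" by (rule card_Fqs_eq[OF cq q2'])
  then obtain a b :: 'a where ab: "a \<in> Fqs q" "b \<in> Fqs q" "a \<noteq> b"
  proof -
    have "2 \<le> card (Fqs q :: 'a set)" using \<open>card (Fqs q :: 'a set) = q - 1\<close> q3 by simp
    then show ?thesis using two_elems[of "Fqs q :: 'a set"] that by blast
  qed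
  have Fq: "c \<in> Fqs q \<Longrightarrow> c \<noteq> 0 \<and> c \<in> fixed_field q" for c :: 'a
    unfolding Fqs_def[OF cq q2'] fixed_field_def by auto
  have tq: "t ^ q \<noteq> 0" using t0 frob_eq0[OF cq] by simp
  have memb: "\<exists>c. Q * (B + (1 / (l * t ^ q * t)) \<cdot>\<^sub>m Em ?n) * adj q Q = N + c \<cdot>\<^sub>m H" if l: "l \<in> Fqs q" for l
  proof -
    have l0: "l \<noteq> 0" "l \<in> fixed_field q" using Fq[OF l] by auto
    define X where "X = A + l \<cdot>\<^sub>m (col x * rowc q x)"
    define Y where "Y = Q * (B + (1 / (l * t ^ q * t)) \<cdot>\<^sub>m Em ?n) * adj q Q"
    have XL: "X \<in> L" unfolding L X_def using l0 by blast
    have Xc: "X \<in> carrier_mat ?n ?n" unfolding X_def using A x by (auto intro!: mult_carrier_mat simp: rowc_carrier)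
    have Yc: "Y \<in> carrier_mat ?n ?n" unfolding Y_def using Qc Bc by auto
    have XY: "X * Y = 1\<^sub>m ?n" unfolding X_def Y_def aQ using inv[OF l0(1)] unfolding Q_def .
    have YX: "Y * X = 1\<^sub>m ?n" by (rule mat_mult_left_right_inverse[OF Xc Yc XY])
    have "Y \<in> inv_set ?n L" unfolding inv_set_def using XL Yc XY YX by blast
    then obtain c where "Y = N + c \<cdot>\<^sub>m H" unfolding IL H_def by blast
    then show ?thesis unfolding Y_def by blast
  qed
  obtain c1 where e1: "Q * (B + (1 / (a * t ^ q * t)) \<cdot>\<^sub>m Em ?n) * adj q Q = N + c1 \<cdot>\<^sub>m H" using memb[OF ab(1)] by blast
  obtain c2 where e2: "Q * (B + (1 / (b * t ^ q * t)) \<cdot>\<^sub>m Em ?n) * adj q Q = N + c2 \<cdot>\<^sub>m H" using memb[OF ab(2)] by blast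
  have mu: "1 / (a * t ^ q * t) \<noteq> 1 / (b * t ^ q * t)" using ab(3) t0 tq Fq[OF ab(1)] Fq[OF ab(2)] by simp
  have Bnz: "det (B + g \<cdot>\<^sub>m Em ?n) \<noteq> 0" if "g \<noteq> 0" for g
    using det_block_nz[OF cq q2' x'c _ that] t0 unfolding B_def z_def t_def by simp
  have "N = Q * B * adj q Q"
    by (rule base_unique[OF cq q2' Qc Qic QiQ Bc Bnz N rN Hc mu e1 e2])
  then show ?thesis unfolding Q_def B_def z_def t_def x'_def .
qed


lemma L_scale:
  assumes x1: "(x1 :: 'a vec) \<in> carrier_vec n" and nu: "\<nu> \<noteq> 0" "\<nu> ^ q = \<nu>"
    and O2: "col x2 * rowc q x2 = \<nu> \<cdot>\<^sub>m (col x1 * rowc q x1)"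
  shows "{A + c \<cdot>\<^sub>m (col x1 * rowc q x1) | c. c \<noteq> 0 \<and> c \<in> fixed_field q} =
         {A + c \<cdot>\<^sub>m (col x2 * rowc q x2) | c. c \<noteq> 0 \<and> c \<in> fixed_field q}"
proof -
  have sm: "c \<cdot>\<^sub>m (\<nu> \<cdot>\<^sub>m M) = (c * \<nu>) \<cdot>\<^sub>m M" for c and M :: "'a mat" by (rule eq_matI) auto
  show ?thesis
  proof (rule equalityI; rule subsetI)
    fix X assume "X \<in> {A + c \<cdot>\<^sub>m (col x1 * rowc q x1) | c. c \<noteq> 0 \<and> c \<in> fixed_field q}"
    then obtain c where c: "X = A + c \<cdot>\<^sub>m (col x1 * rowc q x1)" "c \<noteq> 0" "c ^ q = c" unfolding fixed_field_def by blast
    have "X = A + (c / \<nu>) \<cdot>\<^sub>m (col x2 * rowc q x2)" unfolding O2 sm c(1) using nu by simp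
    moreover have "(c / \<nu>) ^ q = c / \<nu>" using c nu by (simp add: power_divide)
    ultimately show "X \<in> {A + c \<cdot>\<^sub>m (col x2 * rowc q x2) | c. c \<noteq> 0 \<and> c \<in> fixed_field q}"
      using c nu unfolding fixed_field_def by auto
  next
    fix X assume "X \<in> {A + c \<cdot>\<^sub>m (col x2 * rowc q x2) | c. c \<noteq> 0 \<and> c \<in> fixed_field q}"
    then obtain c where c: "X = A + c \<cdot>\<^sub>m (col x2 * rowc q x2)" "c \<noteq> 0" "c ^ q = c" unfolding fixed_field_def by blast
    have "X = A + (c * \<nu>) \<cdot>\<^sub>m (col x1 * rowc q x1)" unfolding c(1) O2 sm ..
    moreover have "(c * \<nu>) ^ q = c * \<nu>" using c nu by (simp add: power_mult_distrib)
    ultimately show "X \<in> {A + c \<cdot>\<^sub>m (col x1 * rowc q x1) | c. c \<noteq> 0 \<and> c \<in> fixed_field q}"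
      using c nu unfolding fixed_field_def by auto
  qed
qed

end

theorem corollary3p2:
  fixes A N1 N2 :: "'a::{finite,field} mat" and L1 L2 :: "'a mat set" and q n :: nat
  assumes "card (UNIV :: 'a set) = q ^ 2" and "q \<ge> 3" and "n \<ge> 2"
    and "A \<in> carrier_mat n n" and "hermitian q A" and "vec_space.rank n A = n - 1"
    and "is_leaf q n A L1" and "is_leaf q n A L2" and "L1 \<noteq> L2"
    and "N1 \<in> carrier_mat n n" and "hermitian q N1" and "vec_space.rank n N1 = n - 1"
    and "is_leaf q n N1 (inv_set n L1)"
    and "N2 \<in> carrier_mat n n" and "hermitian q N2" and "vec_space.rank n N2 = n - 1"
    and "is_leaf q n N2 (inv_set n L2)"
  shows "(\<exists>Q z1 z2. Q \<in> carrier_mat n n \<and> invertible_mat Q \<and>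
            z1 \<in> carrier_vec (n - 1) \<and> z2 \<in> carrier_vec (n - 1) \<and> z1 \<noteq> z2 \<and>
            N1 = Q * block_z q n z1 * adj q Q \<and> N2 = Q * block_z q n z2 * adj q Q)
         \<and> vec_space.rank n (N1 - N2) = 2"
proof -
  note cq = assms(1) and q3 = assms(2)
  have q2: "q \<ge> 2" using q3 by simp
  obtain m where nm: "n = Suc m" and m1: "m \<ge> 1" using assms(3) by (cases n) auto
  have A: "A \<in> carrier_mat (Suc m) (Suc m)" using assms(4) nm by simp
  obtain P R where PR: "P \<in> carrier_mat n n" "R \<in> carrier_mat n n" "P * R = 1\<^sub>m n" "R * P = 1\<^sub>m n"
      "A = R * Dk n (n - 1) * adj q R"
    using herm_form[OF cq q2 assms(4,5,6)] assms(3) by auto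
  have P: "P \<in> carrier_mat (Suc m) (Suc m)" and R: "R \<in> carrier_mat (Suc m) (Suc m)"
    and PR1: "P * R = 1\<^sub>m (Suc m)" and RP1: "R * P = 1\<^sub>m (Suc m)"
    and AF: "A = R * Dk (Suc m) m * adj q R" using PR nm by auto
  obtain x1 where x1: "x1 \<in> carrier_vec (Suc m)" "x1 \<notin> vec_space.col_space (Suc m) A"
    and L1: "L1 = {A + c \<cdot>\<^sub>m (col x1 * rowc q x1) | c. c \<noteq> 0 \<and> c \<in> fixed_field q}"
    using assms(7) nm unfolding is_leaf_def by blast
  obtain x2 where x2: "x2 \<in> carrier_vec (Suc m)" "x2 \<notin> vec_space.col_space (Suc m) A"
    and L2: "L2 = {A + c \<cdot>\<^sub>m (col x2 * rowc q x2) | c. c \<noteq> 0 \<and> c \<in> fixed_field q}"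
    using assms(8) nm unfolding is_leaf_def by blast
  define Q where "Q = adj q P"
  define z1 where "z1 = vec m (\<lambda>i. - (P *\<^sub>v x1) $ i / (P *\<^sub>v x1) $ m)"
  define z2 where "z2 = vec m (\<lambda>i. - (P *\<^sub>v x2) $ i / (P *\<^sub>v x2) $ m)"
  have N1F: "N1 = Q * block_z q (Suc m) z1 * adj q Q"
    unfolding Q_def z1_def
    by (rule N_from_leaf[OF cq q3 P R PR1 RP1 AF x1 L1]) (use assms(10,12,13) nm in auto)
  have N2F: "N2 = Q * block_z q (Suc m) z2 * adj q Q"
    unfolding Q_def z2_def
    by (rule N_from_leaf[OF cq q3 P R PR1 RP1 AF x2 L2]) (use assms(14,16,17) nm in auto)
  have Qc: "Q \<in> carrier_mat (Suc m) (Suc m)" unfolding Q_def using P by simp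
  have Qic: "adj q R \<in> carrier_mat (Suc m) (Suc m)" using R by simp
  have QiQ: "adj q R * Q = 1\<^sub>m (Suc m)" unfolding Q_def by (rule adj_inv[OF cq q2 P R PR1])
  have QQi: "Q * adj q R = 1\<^sub>m (Suc m)" unfolding Q_def by (rule adj_inv[OF cq q2 R P RP1])
  have z1c: "z1 \<in> carrier_vec m" and z2c: "z2 \<in> carrier_vec m" unfolding z1_def z2_def by auto
  have z12: "z1 \<noteq> z2"
  proof
    assume zeq: "z1 = z2"
    define y1 where "y1 = P *\<^sub>v x1"
    define y2 where "y2 = P *\<^sub>v x2"
    define t1 where "t1 = y1 $ m"
    define t2 where "t2 = y2 $ m"
    have t1: "t1 \<noteq> 0" unfolding t1_def y1_def by (rule leaf_analysis(1)[OF cq q2 P R PR1 RP1 AF x1])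
    have t2: "t2 \<noteq> 0" unfolding t2_def y2_def by (rule leaf_analysis(1)[OF cq q2 P R PR1 RP1 AF x2])
    have y1c: "y1 \<in> carrier_vec (Suc m)" and y2c: "y2 \<in> carrier_vec (Suc m)" unfolding y1_def y2_def using P x1 x2 by auto
    define s where "s = t2 / t1"
    have s0: "s \<noteq> 0" unfolding s_def using t1 t2 by simp
    have yy: "y2 = s \<cdot>\<^sub>v y1"
    proof (rule eq_vecI)
      fix k assume "k < dim_vec (s \<cdot>\<^sub>v y1)"
      then have k: "k < Suc m" using y1c by simp
      show "y2 $ k = (s \<cdot>\<^sub>v y1) $ k"
      proof (cases "k = m")
        case True then show ?thesis using y1c t1 unfolding s_def t1_def t2_def by simp
      next
        case False
        then have km: "k < m" using k by simp
        have "z1 $ k = z2 $ k" using zeq by simp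
        then have "- y1 $ k / t1 = - y2 $ k / t2" using km unfolding z1_def z2_def y1_def y2_def t1_def t2_def by simp
        then show ?thesis using km y1c t1 t2 unfolding s_def by (simp add: field_simps)
      qed
    qed (use y1c y2c in auto)
    have xR1: "R *\<^sub>v y1 = x1" unfolding y1_def using R P x1 RP1 by (simp flip: assoc_mult_mat_vec)
    have xR2: "R *\<^sub>v y2 = x2" unfolding y2_def using R P x2 RP1 by (simp flip: assoc_mult_mat_vec)
    have xx: "x2 = s \<cdot>\<^sub>v x1" unfolding xR1[symmetric] xR2[symmetric] yy using R y1c by (simp add: mult_mat_vec)
    define \<nu> where "\<nu> = s * s ^ q"
    have nu0: "\<nu> \<noteq> 0" unfolding \<nu>_def using s0 frob_eq0[OF cq, of s] by simp
    have nuq: "\<nu> ^ q = \<nu>" unfolding \<nu>_def by (simp add: power_mult_distrib frob_inv[OF cq] mult.commute)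
    have O2: "col x2 * rowc q x2 = \<nu> \<cdot>\<^sub>m (col x1 * rowc q x1)"
    proof (rule eq_matI)
      fix i j assume "i < dim_row (\<nu> \<cdot>\<^sub>m (col x1 * rowc q x1))" "j < dim_col (\<nu> \<cdot>\<^sub>m (col x1 * rowc q x1))"
      then have ij: "i < Suc m" "j < Suc m" using x1 by auto
      show "(col x2 * rowc q x2) $$ (i,j) = (\<nu> \<cdot>\<^sub>m (col x1 * rowc q x1)) $$ (i,j)"
        using ij x1 x2 outer_index[of i x2 j x2 q] outer_index[of i x1 j x1 q] unfolding xx \<nu>_def
        by (simp add: power_mult_distrib ac_simps del: index_mult_mat(1))
    qed (use x1 x2 in auto)
    have "L1 = L2" unfolding L1 L2 by (rule L_scale[OF cq q3 x1(1) nu0 nuq O2])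
    then show False using assms(9) by simp
  qed
  have inv: "invertible_mat Q"
    unfolding invertible_mat_def inverts_mat_def square_mat.simps using Qc Qic QiQ QQi
    by (intro conjI exI[of _ "adj q R"]) auto
  have r2: "vec_space.rank (Suc m) (N1 - N2) = 2"
    unfolding N1F N2F by (rule rank_two[OF cq q2 Qc Qic QiQ z1c z2c z12])
  show ?thesis
    using Qc inv z1c z2c z12 N1F N2F r2 nm by (intro conjI exI[of _ Q] exI[of _ z1] exI[of _ z2]) auto
qed


end
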